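(* Let $(\mathcal{C},\mathbb{E},\mathfrak{s})$ be an extriangulated category with enough injective objects and enough projective objects, and let $(\mathcal{I},\mathcal{J})$ be an $\mathbb{E}$-cotorsion pair of ideals. Then the following statements are equivalent: (1) $(\mathcal{I},\mathcal{J})$ is a complete $\mathbb{E}$-cotorsion pair; (2) $\mathcal{I}$ is a special precovering ideal; (3) there is an additive subfunctor $\mathbb{F}\subseteq\mathbb{E}$ having enough special injective morphisms with $\mathcal{I}=\mathrm{Ph}(\mathbb{F})$; (4) there is an additive subfunctor $\mathbb{F}\subseteq\mathbb{E}$ having enough special projective morphisms with $\mathcal{I}=\mathbb{F}\text{-}\mathrm{proj}$; (5) $\mathcal{I}^\star$ has enough special injective morphisms and $\mathcal{I}=\mathrm{Ph}(\mathcal{I}^\star)$; (6) $\mathcal{J}_\star$ has enough special projective morphisms and $\mathcal{I}=\mathcal{J}_\star\text{-}\mathrm{proj}$; (7) $\mathcal{J}$ is a special preenveloping ideal; (8) there is an additive subfunctor $\mathbb{F}\subseteq\mathbb{E}$ having enough special projective morphisms with $\mathcal{J}=\mathrm{Coph}(\mathbb{F})$; (9) there is an additive subfunctor $\mathbb{F}\subseteq\mathbb{E}$ having enough special injective morphisms with $\mathcal{J}=\mathbb{F}\text{-}\mathrm{inj}$; (10) $\mathcal{J}_\star$ has enough special projective morphisms and $\mathcal{J}=\mathrm{Coph}(\mathcal{J}_\star)$; (11) $\mathcal{I}^\star$ has enough special injective morphisms and $\mathcal{J}=\mathcal{I}^\star\text{-}\mathrm{inj}$.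
   Context: An extriangulated category $(\mathcal{C},\mathbb{E},\mathfrak{s})$ (Nakaoka–Palu): additive $\mathcal{C}$, biadditive $\mathbb{E}:\mathcal{C}^{\mathrm{op}}\times\mathcal{C}\to\mathrm{Ab}$, additive realization $\mathfrak{s}$ assigning to each $\delta\in\mathbb{E}(C,A)$ an equivalence class of sequences $A\to B\to C$, forming $\mathbb{E}$-triangles $A\to B\to C\overset{\delta}{\dashrightarrow}$, satisfying (ET1)–(ET4), (ET3)$^{\mathrm{op}}$, (ET4)$^{\mathrm{op}}$. Notation $a_\star\delta=\mathbb{E}(C,a)(\delta)$, $c^\star\delta=\mathbb{E}(c,A)(\delta)$; a morphism of $\mathbb{E}$-triangles is a commuting triple $(a,b,c)$ with $a_\star\delta=c^\star\delta'$. Injective object $E$: $\mathbb{E}(C,E)=0$ for all $C$; projective object $P$: $\mathbb{E}(P,A)=0$ for all $A$; enough injectives: every $A$ admits an $\mathbb{E}$-triangle $A\to E\to C\overset{\delta}{\dashrightarrow}$, $E$ injective; enough projectives: every $C$ admits $K\to P\to C\overset{\delta}{\dashrightarrow}$, $P$ projective. Ideal: class of morphisms with zeros, closed under sums and two-sided composition. Additive subfunctor $\mathbb{F}$: subgroups $\mathbb{F}(C,A)\subseteq\mathbb{E}(C,A)$ stable under $a_\star,c^\star$; $\mathbb{F}$-triangles have extension in $\mathbb{F}$. $\mathrm{Ph}(\mathbb{F})$: morphisms $\varphi:X\to C$ with $\varphi^\star\delta\in\mathbb{F}$ for all $\delta\in\mathbb{E}(C,A)$; $\mathrm{Coph}(\mathbb{F})$: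 morphisms $\psi:A\to Y$ with $\psi_\star\delta\in\mathbb{F}$ for all $\delta\in\mathbb{E}(C,A)$. $\mathbb{F}\text{-}\mathrm{inj}$: $i:A\to Y$ with $i_\star\delta=0$ for all $\delta\in\mathbb{F}(C,A)$; $\mathbb{F}\text{-}\mathrm{proj}$: $p:X\to C$ with $p^\star\delta=0$ for all $\delta\in\mathbb{F}(C,A)$. For an ideal $\mathcal{I}$: $\mathcal{I}^\star=\{i^\star\delta\}$, $\mathcal{I}_\star=\{i_\star\delta\}$ ($i\in\mathcal{I}$, $\delta$ any composable $\mathbb{E}$-extension), additive subfunctors of $\mathbb{E}$. $\mathbb{F}$ has enough special injective morphisms: every $A$ admits an $\mathbb{F}$-triangle $A\xrightarrow{e}B\to C\overset{\delta}{\dashrightarrow}$ with $e\in\mathbb{F}\text{-}\mathrm{inj}$, an $\mathbb{E}$-triangle $A\to B'\to C'\overset{\delta'}{\dashrightarrow}$ and a morphism $(\mathrm{id}_A,b,\varphi)$ from the former to the latter with $\varphi\in\mathrm{Ph}(\mathbb{F})$. Dually, enough special projective morphisms: every $C$ admits an $\mathbb{F}$-triangle $K\to B\xrightarrow{p}C\overset{\delta}{\dashrightarrow}$ with $p\in\mathbb{F}\text{-}\mathrm{proj}$, an $\mathbb{E}$-triangle $K'\to B'\to C\overset{\delta'}{\dashrightarrow}$ and a morphism $(\psi,b,\mathrm{id}_C)$ from the latter to the former with $\psi\in\mathrm{Coph}(\mathbb{F})$. $\mathcal{M}^{\perp_{\mathbb{E}}}=\{g:A\to Y\mid m^\star g_\star\delta=0\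 \forall m\in\mathcal{M},\,m:X\to C,\ \forall\delta\in\mathbb{E}(C,A)\}$; ${}^{\perp_{\mathbb{E}}}\mathcal{M}$ defined by $g^\star m_\star\delta=0$. $\mathbb{E}$-cotorsion pair: $\mathcal{I}={}^{\perp_{\mathbb{E}}}\mathcal{J}$, $\mathcal{J}=\mathcal{I}^{\perp_{\mathbb{E}}}$; complete if $\mathcal{I}$ special precovering and $\mathcal{J}$ special preenveloping. Special $\mathcal{I}$-precover of $C$: $i:X\to C$ in $\mathcal{I}$ with $\mathbb{E}$-triangles $A\to B\to C\overset{\delta}{\dashrightarrow}$, $A'\to X\xrightarrow{i}C\overset{\delta'}{\dashrightarrow}$ and a morphism $(j,b,\mathrm{id}_C)$, $j\in\mathcal{I}^{\perp_{\mathbb{E}}}$. Special $\mathcal{J}$-preenvelope of $A$: $e:A\to X$ in $\mathcal{J}$ with $\mathbb{E}$-triangles $A\xrightarrow{e}X\to Y\overset{\delta}{\dashrightarrow}$, $A\to B\to C\overset{\delta'}{\dashrightarrow}$ and a morphism $(\mathrm{id}_A,b,j)$, $j\in{}^{\perp_{\mathbb{E}}}\mathcal{J}$. Special precovering/preenveloping ideal: every object has one. *)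

theory Defs
  imports "HOL-Algebra.Group"
begin

section \<open>Extriangulated categories (Nakaoka--Palu), concretely encoded\<close>

text \<open>
  Objects have type 'o, morphisms type 'm, extensions (elements of E(C,A)) type 'e.
  Every morphism has a unique source and target.  cmp g f is the composite g o f.
  homg X A B is the abelian group Hom(A,B) (group operation written multiplicatively
  in HOL-Algebra, meaning addition).  extg X C A is the abelian group E(C,A).
  pushE X C a d = a_* d  (d in E(C,A), a : A -> A'),
  pullE X A c d = c^* d  (d in E(C,A), c : C' -> C).
  rlz X C A d x y means: the sequence A -x-> B -y-> C belongs to the equivalence
  class s(d), for d in E(C,A).
\<close>

record ('o,'m,'e) extri_data =
  ob :: "'o set"
  mor :: "'m set"
  src :: "'m \<Rightarrow> 'o"
  tgt :: "'m \<Rightarrow> 'o"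
  cmp :: "'m \<Rightarrow> 'm \<Rightarrow> 'm"
  idm :: "'o \<Rightarrow> 'm"
  homg :: "'o \<Rightarrow> 'o \<Rightarrow> 'm monoid"
  extg :: "'o \<Rightarrow> 'o \<Rightarrow> 'e monoid"
  pushE :: "'o \<Rightarrow> 'm \<Rightarrow> 'e \<Rightarrow> 'e"
  pullE :: "'o \<Rightarrow> 'm \<Rightarrow> 'e \<Rightarrow> 'e"
  rlz :: "'o \<Rightarrow> 'o \<Rightarrow> 'e \<Rightarrow> 'm \<Rightarrow> 'm \<Rightarrow> bool"

definition morph :: "('o,'m,'e) extri_data \<Rightarrow> 'o \<Rightarrow> 'o \<Rightarrow> 'm set" where
  "morph X A B = {f \<in> mor X. src X f = A \<and> tgt X f = B}"

definition Ext :: "('o,'m,'e) extri_data \<Rightarrow> 'o \<Rightarrow> 'o \<Rightarrow> 'e set" where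
  "Ext X C A = carrier (extg X C A)"

definition hadd :: "('o,'m,'e) extri_data \<Rightarrow> 'm \<Rightarrow> 'm \<Rightarrow> 'm" where
  "hadd X f g = f \<otimes>\<^bsub>homg X (src X f) (tgt X f)\<^esub> g"

definition hzero :: "('o,'m,'e) extri_data \<Rightarrow> 'o \<Rightarrow> 'o \<Rightarrow> 'm" where
  "hzero X A B = \<one>\<^bsub>homg X A B\<^esub>"

definition eadd :: "('o,'m,'e) extri_data \<Rightarrow> 'o \<Rightarrow> 'o \<Rightarrow> 'e \<Rightarrow> 'e \<Rightarrow> 'e" where
  "eadd X C A d d' = d \<otimes>\<^bsub>extg X C A\<^esub> d'"

definition ezero :: "('o,'m,'e) extri_data \<Rightarrow> 'o \<Rightarrow> 'o \<Rightarrow> 'e" where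
  "ezero X C A = \<one>\<^bsub>extg X C A\<^esub>"

definition is_category :: "('o,'m,'e) extri_data \<Rightarrow> bool" where
  "is_category X \<longleftrightarrow>
     (\<forall>f\<in>mor X. src X f \<in> ob X \<and> tgt X f \<in> ob X) \<and>
     (\<forall>A\<in>ob X. idm X A \<in> morph X A A) \<and>
     (\<forall>A B C f g. f \<in> morph X A B \<longrightarrow> g \<in> morph X B C \<longrightarrow> cmp X g f \<in> morph X A C) \<and>
     (\<forall>A B f. f \<in> morph X A B \<longrightarrow> cmp X (idm X B) f = f \<and> cmp X f (idm X A) = f) \<and>
     (\<forall>A B C D f g h. f \<in> morph X A B \<longrightarrow> g \<in> morph X B C \<longrightarrow> h \<in> morph X C D \<longrightarrow>
        cmp X h (cmp X g f) = cmp X (cmp X h g) f)"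

definition is_preadditive :: "('o,'m,'e) extri_data \<Rightarrow> bool" where
  "is_preadditive X \<longleftrightarrow>
     (\<forall>A\<in>ob X. \<forall>B\<in>ob X. comm_group (homg X A B) \<and> carrier (homg X A B) = morph X A B) \<and>
     (\<forall>A B C f f' g. f \<in> morph X A B \<longrightarrow> f' \<in> morph X A B \<longrightarrow> g \<in> morph X B C \<longrightarrow>
        cmp X g (hadd X f f') = hadd X (cmp X g f) (cmp X g f')) \<and>
     (\<forall>A B C f f' h. f \<in> morph X A B \<longrightarrow> f' \<in> morph X A B \<longrightarrow> h \<in> morph X C A \<longrightarrow>
        cmp X (hadd X f f') h = hadd X (cmp X f h) (cmp X f' h))"

definition is_zero_object :: "('o,'m,'e) extri_data \<Rightarrow> 'o \<Rightarrow> bool" where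
  "is_zero_object X Z \<longleftrightarrow> Z \<in> ob X \<and>
     (\<forall>A\<in>ob X. (\<exists>!f. f \<in> morph X Z A) \<and> (\<exists>!f. f \<in> morph X A Z))"

definition biprod :: "('o,'m,'e) extri_data \<Rightarrow> 'o \<Rightarrow> 'o \<Rightarrow> 'o \<Rightarrow> 'm \<Rightarrow> 'm \<Rightarrow> 'm \<Rightarrow> 'm \<Rightarrow> bool" where
  "biprod X A1 A2 S i1 i2 p1 p2 \<longleftrightarrow> S \<in> ob X \<and>
     i1 \<in> morph X A1 S \<and> i2 \<in> morph X A2 S \<and> p1 \<in> morph X S A1 \<and> p2 \<in> morph X S A2 \<and>
     cmp X p1 i1 = idm X A1 \<and> cmp X p2 i2 = idm X A2 \<and>
     cmp X p1 i2 = hzero X A2 A1 \<and> cmp X p2 i1 = hzero X A1 A2 \<and>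
     hadd X (cmp X i1 p1) (cmp X i2 p2) = idm X S"

definition is_additive :: "('o,'m,'e) extri_data \<Rightarrow> bool" where
  "is_additive X \<longleftrightarrow> is_category X \<and> is_preadditive X \<and> (\<exists>Z. is_zero_object X Z) \<and>
     (\<forall>A1\<in>ob X. \<forall>A2\<in>ob X. \<exists>S i1 i2 p1 p2. biprod X A1 A2 S i1 i2 p1 p2)"

definition ET1 :: "('o,'m,'e) extri_data \<Rightarrow> bool" where
  "ET1 X \<longleftrightarrow>
     (\<forall>C\<in>ob X. \<forall>A\<in>ob X. comm_group (extg X C A)) \<and>
     (\<forall>C A A' a. C \<in> ob X \<longrightarrow> a \<in> morph X A A' \<longrightarrow>
        pushE X C a \<in> hom (extg X C A) (extg X C A')) \<and>
     (\<forall>A C C' c. A \<in> ob X \<longrightarrow> c \<in> morph X C' C \<longrightarrow>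
        pullE X A c \<in> hom (extg X C A) (extg X C' A)) \<and>
     (\<forall>C A d. C \<in> ob X \<longrightarrow> A \<in> ob X \<longrightarrow> d \<in> Ext X C A \<longrightarrow>
        pushE X C (idm X A) d = d \<and> pullE X A (idm X C) d = d) \<and>
     (\<forall>C A A' A'' a a' d. C \<in> ob X \<longrightarrow> a \<in> morph X A A' \<longrightarrow> a' \<in> morph X A' A'' \<longrightarrow>
        d \<in> Ext X C A \<longrightarrow> pushE X C (cmp X a' a) d = pushE X C a' (pushE X C a d)) \<and>
     (\<forall>A C C' C'' c c' d. A \<in> ob X \<longrightarrow> c \<in> morph X C' C \<longrightarrow> c' \<in> morph X C'' C' \<longrightarrow>
        d \<in> Ext X C A \<longrightarrow> pullE X A (cmp X c c') d = pullE X A c' (pullE X A c d)) \<and>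
     (\<forall>A A' C C' a c d. a \<in> morph X A A' \<longrightarrow> c \<in> morph X C' C \<longrightarrow> d \<in> Ext X C A \<longrightarrow>
        pullE X A' c (pushE X C a d) = pushE X C' a (pullE X A c d)) \<and>
     (\<forall>C A A' a b d. C \<in> ob X \<longrightarrow> a \<in> morph X A A' \<longrightarrow> b \<in> morph X A A' \<longrightarrow> d \<in> Ext X C A \<longrightarrow>
        pushE X C (hadd X a b) d = eadd X C A' (pushE X C a d) (pushE X C b d)) \<and>
     (\<forall>A C C' c c2 d. A \<in> ob X \<longrightarrow> c \<in> morph X C' C \<longrightarrow> c2 \<in> morph X C' C \<longrightarrow> d \<in> Ext X C A \<longrightarrow>
        pullE X A (hadd X c c2) d = eadd X C' A (pullE X A c d) (pullE X A c2 d))"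

definition is_iso :: "('o,'m,'e) extri_data \<Rightarrow> 'o \<Rightarrow> 'o \<Rightarrow> 'm \<Rightarrow> bool" where
  "is_iso X B B' b \<longleftrightarrow> b \<in> morph X B B' \<and>
     (\<exists>b'. b' \<in> morph X B' B \<and> cmp X b' b = idm X B \<and> cmp X b b' = idm X B')"

definition seq_equiv :: "('o,'m,'e) extri_data \<Rightarrow> 'o \<Rightarrow> 'o \<Rightarrow> 'm \<Rightarrow> 'm \<Rightarrow> 'm \<Rightarrow> 'm \<Rightarrow> bool" where
  "seq_equiv X A C x y x' y' \<longleftrightarrow> (\<exists>B B' b.
     x \<in> morph X A B \<and> y \<in> morph X B C \<and> x' \<in> morph X A B' \<and> y' \<in> morph X B' C \<and>
     is_iso X B B' b \<and> cmp X b x = x' \<and> cmp X y' b = y)"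

definition etri :: "('o,'m,'e) extri_data \<Rightarrow> 'o \<Rightarrow> 'o \<Rightarrow> 'o \<Rightarrow> 'm \<Rightarrow> 'm \<Rightarrow> 'e \<Rightarrow> bool" where
  "etri X A B C x y d \<longleftrightarrow> A \<in> ob X \<and> C \<in> ob X \<and> d \<in> Ext X C A \<and>
     x \<in> morph X A B \<and> y \<in> morph X B C \<and> rlz X C A d x y"

definition tri_mor :: "('o,'m,'e) extri_data \<Rightarrow> 'o \<Rightarrow> 'o \<Rightarrow> 'o \<Rightarrow> 'm \<Rightarrow> 'm \<Rightarrow> 'e \<Rightarrow>
    'o \<Rightarrow> 'o \<Rightarrow> 'o \<Rightarrow> 'm \<Rightarrow> 'm \<Rightarrow> 'e \<Rightarrow> 'm \<Rightarrow> 'm \<Rightarrow> 'm \<Rightarrow> bool" where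
  "tri_mor X A B C x y d A' B' C' x' y' d' a b c \<longleftrightarrow>
     a \<in> morph X A A' \<and> b \<in> morph X B B' \<and> c \<in> morph X C C' \<and>
     cmp X b x = cmp X x' a \<and> cmp X c y = cmp X y' b \<and> pushE X C a d = pullE X A' c d'"

definition is_realization :: "('o,'m,'e) extri_data \<Rightarrow> bool" where
  "is_realization X \<longleftrightarrow>
     (\<forall>C\<in>ob X. \<forall>A\<in>ob X. \<forall>d\<in>Ext X C A.
        (\<exists>x y. rlz X C A d x y) \<and>
        (\<forall>x y. rlz X C A d x y \<longrightarrow> (\<exists>B\<in>ob X. x \<in> morph X A B \<and> y \<in> morph X B C)) \<and>
        (\<forall>x y x' y'. rlz X C A d x y \<longrightarrow> (rlz X C A d x' y' \<longleftrightarrow> seq_equiv X A C x y x' y'))) \<and>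
     (\<forall>A B C x y d A' B' C' x' y' d' a c.
        etri X A B C x y d \<longrightarrow> etri X A' B' C' x' y' d' \<longrightarrow>
        a \<in> morph X A A' \<longrightarrow> c \<in> morph X C C' \<longrightarrow> pushE X C a d = pullE X A' c d' \<longrightarrow>
        (\<exists>b\<in>morph X B B'. cmp X b x = cmp X x' a \<and> cmp X c y = cmp X y' b))"

definition is_additive_realization :: "('o,'m,'e) extri_data \<Rightarrow> bool" where
  "is_additive_realization X \<longleftrightarrow>
     (\<forall>A C S iA iC pA pC. A \<in> ob X \<longrightarrow> C \<in> ob X \<longrightarrow> biprod X A C S iA iC pA pC \<longrightarrow>
        rlz X C A (ezero X C A) iA pC) \<and>
     (\<forall>A B C x y d A' B' C' x' y' d' SA iA iA' pA pA' SB iB iB' pB pB' SC iC iC' pC pC'.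
        etri X A B C x y d \<longrightarrow> etri X A' B' C' x' y' d' \<longrightarrow>
        biprod X A A' SA iA iA' pA pA' \<longrightarrow> biprod X B B' SB iB iB' pB pB' \<longrightarrow>
        biprod X C C' SC iC iC' pC pC' \<longrightarrow>
        rlz X SC SA
          (eadd X SC SA (pushE X SC iA (pullE X A pC d)) (pushE X SC iA' (pullE X A' pC' d')))
          (hadd X (cmp X iB (cmp X x pA)) (cmp X iB' (cmp X x' pA')))
          (hadd X (cmp X iC (cmp X y pB)) (cmp X iC' (cmp X y' pB'))))"

definition ET3 :: "('o,'m,'e) extri_data \<Rightarrow> bool" where
  "ET3 X \<longleftrightarrow> (\<forall>A B C x y d A' B' C' x' y' d' a b.
     etri X A B C x y d \<longrightarrow> etri X A' B' C' x' y' d' \<longrightarrow>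
     a \<in> morph X A A' \<longrightarrow> b \<in> morph X B B' \<longrightarrow> cmp X b x = cmp X x' a \<longrightarrow>
     (\<exists>c\<in>morph X C C'. cmp X c y = cmp X y' b \<and> pushE X C a d = pullE X A' c d'))"

definition ET3op :: "('o,'m,'e) extri_data \<Rightarrow> bool" where
  "ET3op X \<longleftrightarrow> (\<forall>A B C x y d A' B' C' x' y' d' b c.
     etri X A B C x y d \<longrightarrow> etri X A' B' C' x' y' d' \<longrightarrow>
     b \<in> morph X B B' \<longrightarrow> c \<in> morph X C C' \<longrightarrow> cmp X c y = cmp X y' b \<longrightarrow>
     (\<exists>a\<in>morph X A A'. cmp X b x = cmp X x' a \<and> pushE X C a d = pullE X A' c d'))"

definition ET4 :: "('o,'m,'e) extri_data \<Rightarrow> bool" where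
  "ET4 X \<longleftrightarrow> (\<forall>A B D f f' d C F g g' d'.
     etri X A B D f f' d \<longrightarrow> etri X B C F g g' d' \<longrightarrow>
     (\<exists>E h h' dd e d''.
        etri X A C E h h' d'' \<and> etri X D E F dd e (pushE X F f' d') \<and>
        cmp X g f = h \<and> cmp X dd f' = cmp X h' g \<and> cmp X e h' = g' \<and>
        pullE X A dd d'' = d \<and> pushE X E f d'' = pullE X B e d'))"

definition ET4op :: "('o,'m,'e) extri_data \<Rightarrow> bool" where
  "ET4op X \<longleftrightarrow> (\<forall>D A B f' f d F C g' g d'.
     etri X D A B f' f d \<longrightarrow> etri X F B C g' g d' \<longrightarrow>
     (\<exists>E dd e h' h d''.
        etri X D E F dd e (pullE X D g' d) \<and> etri X E A C h' h d'' \<and>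
        cmp X h' dd = f' \<and> cmp X f h' = cmp X g' e \<and> cmp X g f = h \<and>
        pushE X C e d'' = d' \<and> pushE X B dd d = pullE X E g d''))"

definition extriangulated :: "('o,'m,'e) extri_data \<Rightarrow> bool" where
  "extriangulated X \<longleftrightarrow> is_additive X \<and> ET1 X \<and> is_realization X \<and>
     is_additive_realization X \<and> ET3 X \<and> ET3op X \<and> ET4 X \<and> ET4op X"

definition injective_obj :: "('o,'m,'e) extri_data \<Rightarrow> 'o \<Rightarrow> bool" where
  "injective_obj X I \<longleftrightarrow> I \<in> ob X \<and> (\<forall>C\<in>ob X. Ext X C I = {ezero X C I})"

definition projective_obj :: "('o,'m,'e) extri_data \<Rightarrow> 'o \<Rightarrow> bool" where
  "projective_obj X P \<longleftrightarrow> P \<in> ob X \<and> (\<forall>A\<in>ob X. Ext X P A = {ezero X P A})"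

definition enough_injectives :: "('o,'m,'e) extri_data \<Rightarrow> bool" where
  "enough_injectives X \<longleftrightarrow> (\<forall>A\<in>ob X. \<exists>I C x y d. injective_obj X I \<and> etri X A I C x y d)"

definition enough_projectives :: "('o,'m,'e) extri_data \<Rightarrow> bool" where
  "enough_projectives X \<longleftrightarrow> (\<forall>C\<in>ob X. \<exists>K P x y d. projective_obj X P \<and> etri X K P C x y d)"

definition is_ideal :: "('o,'m,'e) extri_data \<Rightarrow> 'm set \<Rightarrow> bool" where
  "is_ideal X M \<longleftrightarrow> M \<subseteq> mor X \<and>
     (\<forall>A\<in>ob X. \<forall>B\<in>ob X. hzero X A B \<in> M) \<and>
     (\<forall>A B f g. f \<in> M \<longrightarrow> g \<in> M \<longrightarrow> f \<in> morph X A B \<longrightarrow> g \<in> morph X A B \<longrightarrow> hadd X f g \<in> M) \<and>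
     (\<forall>A B C f g. f \<in> M \<longrightarrow> f \<in> morph X A B \<longrightarrow> g \<in> morph X B C \<longrightarrow> cmp X g f \<in> M) \<and>
     (\<forall>A B C f h. f \<in> M \<longrightarrow> f \<in> morph X A B \<longrightarrow> h \<in> morph X C A \<longrightarrow> cmp X f h \<in> M)"

definition additive_subfunctor :: "('o,'m,'e) extri_data \<Rightarrow> ('o \<Rightarrow> 'o \<Rightarrow> 'e set) \<Rightarrow> bool" where
  "additive_subfunctor X F \<longleftrightarrow>
     (\<forall>C\<in>ob X. \<forall>A\<in>ob X. subgroup (F C A) (extg X C A)) \<and>
     (\<forall>C A A' a d. C \<in> ob X \<longrightarrow> a \<in> morph X A A' \<longrightarrow> d \<in> F C A \<longrightarrow> pushE X C a d \<in> F C A') \<and>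
     (\<forall>A C C' c d. A \<in> ob X \<longrightarrow> c \<in> morph X C' C \<longrightarrow> d \<in> F C A \<longrightarrow> pullE X A c d \<in> F C' A)"

definition Ftri :: "('o,'m,'e) extri_data \<Rightarrow> ('o \<Rightarrow> 'o \<Rightarrow> 'e set) \<Rightarrow> 'o \<Rightarrow> 'o \<Rightarrow> 'o \<Rightarrow> 'm \<Rightarrow> 'm \<Rightarrow> 'e \<Rightarrow> bool" where
  "Ftri X F A B C x y d \<longleftrightarrow> etri X A B C x y d \<and> d \<in> F C A"

definition Ph :: "('o,'m,'e) extri_data \<Rightarrow> ('o \<Rightarrow> 'o \<Rightarrow> 'e set) \<Rightarrow> 'm set" where
  "Ph X F = {\<phi> \<in> mor X. \<forall>A\<in>ob X. \<forall>d\<in>Ext X (tgt X \<phi>) A. pullE X A \<phi> d \<in> F (src X \<phi>) A}"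

definition Coph :: "('o,'m,'e) extri_data \<Rightarrow> ('o \<Rightarrow> 'o \<Rightarrow> 'e set) \<Rightarrow> 'm set" where
  "Coph X F = {\<psi> \<in> mor X. \<forall>C\<in>ob X. \<forall>d\<in>Ext X C (src X \<psi>). pushE X C \<psi> d \<in> F C (tgt X \<psi>)}"

definition F_inj :: "('o,'m,'e) extri_data \<Rightarrow> ('o \<Rightarrow> 'o \<Rightarrow> 'e set) \<Rightarrow> 'm set" where
  "F_inj X F = {i \<in> mor X. \<forall>C\<in>ob X. \<forall>d\<in>F C (src X i). pushE X C i d = ezero X C (tgt X i)}"

definition F_proj :: "('o,'m,'e) extri_data \<Rightarrow> ('o \<Rightarrow> 'o \<Rightarrow> 'e set) \<Rightarrow> 'm set" where
  "F_proj X F = {p \<in> mor X. \<forall>A\<in>ob X. \<forall>d\<in>F (tgt X p) A. pullE X A p d = ezero X (src X p) A}"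

definition upstar :: "('o,'m,'e) extri_data \<Rightarrow> 'm set \<Rightarrow> 'o \<Rightarrow> 'o \<Rightarrow> 'e set" where
  "upstar X M C' A = {pullE X A i d | i C d. i \<in> M \<and> i \<in> morph X C' C \<and> A \<in> ob X \<and> d \<in> Ext X C A}"

definition lowstar :: "('o,'m,'e) extri_data \<Rightarrow> 'm set \<Rightarrow> 'o \<Rightarrow> 'o \<Rightarrow> 'e set" where
  "lowstar X M C A' = {pushE X C j d | j A d. j \<in> M \<and> j \<in> morph X A A' \<and> C \<in> ob X \<and> d \<in> Ext X C A}"

definition enough_spec_inj :: "('o,'m,'e) extri_data \<Rightarrow> ('o \<Rightarrow> 'o \<Rightarrow> 'e set) \<Rightarrow> bool" where
  "enough_spec_inj X F \<longleftrightarrow> (\<forall>A\<in>ob X. \<exists>B C e y d B' C' x' y' d' b \<phi>.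
     Ftri X F A B C e y d \<and> e \<in> F_inj X F \<and> etri X A B' C' x' y' d' \<and>
     tri_mor X A B C e y d A B' C' x' y' d' (idm X A) b \<phi> \<and> \<phi> \<in> Ph X F)"

definition enough_spec_proj :: "('o,'m,'e) extri_data \<Rightarrow> ('o \<Rightarrow> 'o \<Rightarrow> 'e set) \<Rightarrow> bool" where
  "enough_spec_proj X F \<longleftrightarrow> (\<forall>C\<in>ob X. \<exists>K B x p d K' B' x' y' d' \<psi> b.
     Ftri X F K B C x p d \<and> p \<in> F_proj X F \<and> etri X K' B' C x' y' d' \<and>
     tri_mor X K' B' C x' y' d' K B C x p d \<psi> b (idm X C) \<and> \<psi> \<in> Coph X F)"

definition perp_right :: "('o,'m,'e) extri_data \<Rightarrow> 'm set \<Rightarrow> 'm set" where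
  "perp_right X M = {g \<in> mor X. \<forall>m\<in>M. \<forall>d\<in>Ext X (tgt X m) (src X g).
     pullE X (tgt X g) m (pushE X (tgt X m) g d) = ezero X (src X m) (tgt X g)}"

definition perp_left :: "('o,'m,'e) extri_data \<Rightarrow> 'm set \<Rightarrow> 'm set" where
  "perp_left X M = {g \<in> mor X. \<forall>m\<in>M. \<forall>d\<in>Ext X (tgt X g) (src X m).
     pullE X (tgt X m) g (pushE X (tgt X g) m d) = ezero X (src X g) (tgt X m)}"

definition cotorsion_pair :: "('o,'m,'e) extri_data \<Rightarrow> 'm set \<Rightarrow> 'm set \<Rightarrow> bool" where
  "cotorsion_pair X I J \<longleftrightarrow> is_ideal X I \<and> is_ideal X J \<and> I = perp_left X J \<and> J = perp_right X I"

definition spec_precover :: "('o,'m,'e) extri_data \<Rightarrow> 'm set \<Rightarrow> 'o \<Rightarrow> 'm \<Rightarrow> bool" where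
  "spec_precover X I C i \<longleftrightarrow> i \<in> I \<and> tgt X i = C \<and>
     (\<exists>A B x y d A' x' d' j b.
        etri X A B C x y d \<and> etri X A' (src X i) C x' i d' \<and>
        tri_mor X A B C x y d A' (src X i) C x' i d' j b (idm X C) \<and> j \<in> perp_right X I)"

definition spec_precovering :: "('o,'m,'e) extri_data \<Rightarrow> 'm set \<Rightarrow> bool" where
  "spec_precovering X I \<longleftrightarrow> (\<forall>C\<in>ob X. \<exists>i. spec_precover X I C i)"

definition spec_preenvelope :: "('o,'m,'e) extri_data \<Rightarrow> 'm set \<Rightarrow> 'o \<Rightarrow> 'm \<Rightarrow> bool" where
  "spec_preenvelope X J A e \<longleftrightarrow> e \<in> J \<and> src X e = A \<and>
     (\<exists>Y y d B C x' y' d' b j.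
        etri X A (tgt X e) Y e y d \<and> etri X A B C x' y' d' \<and>
        tri_mor X A (tgt X e) Y e y d A B C x' y' d' (idm X A) b j \<and> j \<in> perp_left X J)"

definition spec_preenveloping :: "('o,'m,'e) extri_data \<Rightarrow> 'm set \<Rightarrow> bool" where
  "spec_preenveloping X J \<longleftrightarrow> (\<forall>A\<in>ob X. \<exists>e. spec_preenvelope X J A e)"

definition complete_cotorsion_pair :: "('o,'m,'e) extri_data \<Rightarrow> 'm set \<Rightarrow> 'm set \<Rightarrow> bool" where
  "complete_cotorsion_pair X I J \<longleftrightarrow> cotorsion_pair X I J \<and>
     spec_precovering X I \<and> spec_preenveloping X J"

end

theory Submission
  imports Defs
begin


locale extc =
  fixes X :: "('o,'m,'e) extri_data"
  assumes ext: "extriangulated X"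
begin

lemma cat: "is_category X" using ext unfolding extriangulated_def is_additive_def by blast
lemma preadd: "is_preadditive X" using ext unfolding extriangulated_def is_additive_def by blast
lemma addi: "is_additive X" using ext unfolding extriangulated_def by blast
lemmas BP = addi[unfolded is_additive_def, THEN conjunct2, THEN conjunct2, THEN conjunct2]
lemma et1: "ET1 X" using ext unfolding extriangulated_def by blast
lemma real: "is_realization X" using ext unfolding extriangulated_def by blast
lemma areal: "is_additive_realization X" using ext unfolding extriangulated_def by blast
lemma et3: "ET3 X" using ext unfolding extriangulated_def by blast
lemma et3op: "ET3op X" using ext unfolding extriangulated_def by blast

lemmas CAT1 = cat[unfolded is_category_def, THEN conjunct1]
lemmas CAT2 = cat[unfolded is_category_def, THEN conjunct2, THEN conjunct1]
lemmas CAT3 = cat[unfolded is_category_def, THEN conjunct2, THEN conjunct2, THEN conjunct1]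
lemmas CAT4 = cat[unfolded is_category_def, THEN conjunct2, THEN conjunct2, THEN conjunct2, THEN conjunct1]
lemmas CAT5 = cat[unfolded is_category_def, THEN conjunct2, THEN conjunct2, THEN conjunct2, THEN conjunct2]
lemmas CAT = CAT1 CAT2 CAT3 CAT4 CAT5
lemmas E1_1 = et1[unfolded ET1_def, THEN conjunct1]
lemmas E1_2 = et1[unfolded ET1_def, THEN conjunct2, THEN conjunct1]
lemmas E1_3 = et1[unfolded ET1_def, THEN conjunct2, THEN conjunct2, THEN conjunct1]
lemmas E1_4 = et1[unfolded ET1_def, THEN conjunct2, THEN conjunct2, THEN conjunct2, THEN conjunct1]
lemmas E1_5 = et1[unfolded ET1_def, THEN conjunct2, THEN conjunct2, THEN conjunct2, THEN conjunct2, THEN conjunct1]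
lemmas E1_6 = et1[unfolded ET1_def, THEN conjunct2, THEN conjunct2, THEN conjunct2, THEN conjunct2, THEN conjunct2, THEN conjunct1]
lemmas E1_7 = et1[unfolded ET1_def, THEN conjunct2, THEN conjunct2, THEN conjunct2, THEN conjunct2, THEN conjunct2, THEN conjunct2, THEN conjunct1]
lemmas E1_8 = et1[unfolded ET1_def, THEN conjunct2, THEN conjunct2, THEN conjunct2, THEN conjunct2, THEN conjunct2, THEN conjunct2, THEN conjunct2, THEN conjunct1]
lemmas E1_9 = et1[unfolded ET1_def, THEN conjunct2, THEN conjunct2, THEN conjunct2, THEN conjunct2, THEN conjunct2, THEN conjunct2, THEN conjunct2, THEN conjunct2]
lemmas R_1 = real[unfolded is_realization_def, THEN conjunct1]
lemmas R_2 = real[unfolded is_realization_def, THEN conjunct2]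

lemma morphD: assumes "f \<in> morph X A B"
  shows "A \<in> ob X" "B \<in> ob X" "f \<in> mor X" "src X f = A" "tgt X f = B"
proof -
  from assms have h: "f \<in> mor X" "src X f = A" "tgt X f = B" unfolding morph_def by auto
  then show "A \<in> ob X" "B \<in> ob X" "f \<in> mor X" "src X f = A" "tgt X f = B"
    using CAT1 by auto
qed

lemma mor_morph: "f \<in> mor X \<Longrightarrow> f \<in> morph X (src X f) (tgt X f)"
  unfolding morph_def by auto

lemma mor_ob: "f \<in> mor X \<Longrightarrow> src X f \<in> ob X \<and> tgt X f \<in> ob X"
  using CAT1 by blast

lemma cmp_morph: "f \<in> morph X A B \<Longrightarrow> g \<in> morph X B C \<Longrightarrow> cmp X g f \<in> morph X A C"
  by (rule CAT(3)[rule_format])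

lemma id_morph: "A \<in> ob X \<Longrightarrow> idm X A \<in> morph X A A"
  by (rule CAT(2)[rule_format])

lemma id_l: "f \<in> morph X A B \<Longrightarrow> cmp X (idm X B) f = f"
  using CAT(4)[rule_format] by blast
lemma id_r: "f \<in> morph X A B \<Longrightarrow> cmp X f (idm X A) = f"
  using CAT(4)[rule_format] by blast
lemma assoc: "f \<in> morph X A B \<Longrightarrow> g \<in> morph X B C \<Longrightarrow> h \<in> morph X C D \<Longrightarrow>
        cmp X h (cmp X g f) = cmp X (cmp X h g) f"
  by (rule CAT(5)[rule_format])

lemma ext_group: "C \<in> ob X \<Longrightarrow> A \<in> ob X \<Longrightarrow> group (extg X C A)"
  using E1_1 unfolding comm_group_def by blast

lemma push_hom: "C \<in> ob X \<Longrightarrow> a \<in> morph X A A' \<Longrightarrow> pushE X C a \<in> hom (extg X C A) (extg X C A')"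
  by (rule E1_2[rule_format])
lemma pull_hom: "A \<in> ob X \<Longrightarrow> c \<in> morph X C' C \<Longrightarrow> pullE X A c \<in> hom (extg X C A) (extg X C' A)"
  by (rule E1_3[rule_format])

lemma push_Ext: "C \<in> ob X \<Longrightarrow> a \<in> morph X A A' \<Longrightarrow> d \<in> Ext X C A \<Longrightarrow> pushE X C a d \<in> Ext X C A'"
  unfolding Ext_def by (rule hom_in_carrier[OF push_hom])
lemma pull_Ext: "A \<in> ob X \<Longrightarrow> c \<in> morph X C' C \<Longrightarrow> d \<in> Ext X C A \<Longrightarrow> pullE X A c d \<in> Ext X C' A"
  unfolding Ext_def by (rule hom_in_carrier[OF pull_hom])

lemma ezero_Ext: "C \<in> ob X \<Longrightarrow> A \<in> ob X \<Longrightarrow> ezero X C A \<in> Ext X C A"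
  unfolding Ext_def ezero_def by (rule monoid.one_closed[OF group.is_monoid[OF ext_group]])

lemma push_zero: assumes "C \<in> ob X" "a \<in> morph X A A'" shows "pushE X C a (ezero X C A) = ezero X C A'"
proof -
  have o: "A \<in> ob X" "A' \<in> ob X" using morphD[OF assms(2)] by auto
  show ?thesis unfolding ezero_def
    by (rule hom_one[OF push_hom[OF assms] ext_group[OF assms(1) o(1)] ext_group[OF assms(1) o(2)]])
qed
lemma pull_zero: assumes "A \<in> ob X" "c \<in> morph X C' C" shows "pullE X A c (ezero X C A) = ezero X C' A"
proof -
  have o: "C \<in> ob X" "C' \<in> ob X" using morphD[OF assms(2)] by auto
  show ?thesis unfolding ezero_def
    by (rule hom_one[OF pull_hom[OF assms] ext_group[OF o(1) assms(1)] ext_group[OF o(2) assms(1)]])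
qed

lemma push_id: "C \<in> ob X \<Longrightarrow> A \<in> ob X \<Longrightarrow> d \<in> Ext X C A \<Longrightarrow> pushE X C (idm X A) d = d"
  using E1_4[rule_format] by blast
lemma pull_id: "C \<in> ob X \<Longrightarrow> A \<in> ob X \<Longrightarrow> d \<in> Ext X C A \<Longrightarrow> pullE X A (idm X C) d = d"
  using E1_4[rule_format] by blast
lemma push_cmp: "C \<in> ob X \<Longrightarrow> a \<in> morph X A A' \<Longrightarrow> a' \<in> morph X A' A'' \<Longrightarrow>
        d \<in> Ext X C A \<Longrightarrow> pushE X C (cmp X a' a) d = pushE X C a' (pushE X C a d)"
  by (rule E1_5[rule_format])
lemma pull_cmp: "A \<in> ob X \<Longrightarrow> c \<in> morph X C' C \<Longrightarrow> c' \<in> morph X C'' C' \<Longrightarrow>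
        d \<in> Ext X C A \<Longrightarrow> pullE X A (cmp X c c') d = pullE X A c' (pullE X A c d)"
  by (rule E1_6[rule_format])
lemma pull_push: "a \<in> morph X A A' \<Longrightarrow> c \<in> morph X C' C \<Longrightarrow> d \<in> Ext X C A \<Longrightarrow>
        pullE X A' c (pushE X C a d) = pushE X C' a (pullE X A c d)"
  by (rule E1_7[rule_format])

lemma etriD: assumes "etri X A B C x y d"
  shows "A \<in> ob X" "B \<in> ob X" "C \<in> ob X" "x \<in> morph X A B" "y \<in> morph X B C" "d \<in> Ext X C A"
  using assms morphD(1,2) unfolding etri_def by blast+

lemma realize: assumes "C \<in> ob X" "A \<in> ob X" "d \<in> Ext X C A"
  shows "\<exists>B x y. etri X A B C x y d"
proof -
  from R_1 assms obtain x y where r: "rlz X C A d x y" by blast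
  with R_1 assms obtain B where "B \<in> ob X" "x \<in> morph X A B" "y \<in> morph X B C"
    by blast
  with r assms show ?thesis unfolding etri_def by blast
qed

lemma realmor: assumes "etri X A B C x y d" "etri X A' B' C' x' y' d'"
  "a \<in> morph X A A'" "c \<in> morph X C C'" "pushE X C a d = pullE X A' c d'"
  shows "\<exists>b\<in>morph X B B'. cmp X b x = cmp X x' a \<and> cmp X c y = cmp X y' b"
  using R_2[rule_format, OF assms] .

lemma split_tri: assumes "A \<in> ob X" "W \<in> ob X"
  shows "\<exists>S iA iW pA pW. biprod X A W S iA iW pA pW \<and> etri X A S W iA pW (ezero X W A)"
proof -
  from BP assms obtain S iA iW pA pW where b: "biprod X A W S iA iW pA pW"
    by blast
  then have r: "rlz X W A (ezero X W A) iA pW"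
    using areal[unfolded is_additive_realization_def, THEN conjunct1, rule_format, OF assms] by blast
  from b have m: "iA \<in> morph X A S" "pW \<in> morph X S W" unfolding biprod_def by auto
  have "etri X A S W iA pW (ezero X W A)" unfolding etri_def using r m assms ezero_Ext by simp
  with b show ?thesis by blast
qed

lemma ET3': assumes "etri X A B C x y d" "etri X A' B' C' x' y' d'"
     "a \<in> morph X A A'" "b \<in> morph X B B'" "cmp X b x = cmp X x' a"
  shows "\<exists>c\<in>morph X C C'. cmp X c y = cmp X y' b \<and> pushE X C a d = pullE X A' c d'"
  using et3[unfolded ET3_def, rule_format, OF assms] .
lemma ET3op': assumes "etri X A B C x y d" "etri X A' B' C' x' y' d'"
     "b \<in> morph X B B'" "c \<in> morph X C C'" "cmp X c y = cmp X y' b"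
  shows "\<exists>a\<in>morph X A A'. cmp X b x = cmp X x' a \<and> pushE X C a d = pullE X A' c d'"
  using et3op[unfolded ET3op_def, rule_format, OF assms] .

end



context extc
begin

lemma biprodD: assumes "biprod X A1 A2 S i1 i2 p1 p2"
  shows "i1 \<in> morph X A1 S" "i2 \<in> morph X A2 S" "p1 \<in> morph X S A1" "p2 \<in> morph X S A2"
    "cmp X p1 i1 = idm X A1" "cmp X p2 i2 = idm X A2"
  using assms unfolding biprod_def by auto

lemma L1a: assumes t: "etri X A B C x y d" shows "pushE X C x d = ezero X C B"
proof -
  have o: "B \<in> ob X" "C \<in> ob X" using etriD[OF t] by auto
  obtain S i1 i2 p1 p2 where b: "biprod X B B S i1 i2 p1 p2" and t2: "etri X B S B i1 p2 (ezero X B B)"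
    using split_tri[OF o(1) o(1)] by blast
  obtain c where c: "c \<in> morph X C B" "pushE X C x d = pullE X B c (ezero X B B)"
    using ET3'[OF t t2 etriD(4)[OF t] biprodD(1)[OF b] refl] by blast
  show ?thesis using c pull_zero[OF o(1) c(1)] by simp
qed

lemma L1b: assumes t: "etri X A B C x y d" shows "pullE X A y d = ezero X B A"
proof -
  have o: "B \<in> ob X" "A \<in> ob X" using etriD[OF t] by auto
  obtain S i1 i2 p1 p2 where b: "biprod X B B S i1 i2 p1 p2" and t2: "etri X B S B i1 p2 (ezero X B B)"
    using split_tri[OF o(1) o(1)] by blast
  obtain a where a: "a \<in> morph X B A" "pushE X B a (ezero X B B) = pullE X A y d"
    using ET3op'[OF t2 t biprodD(4)[OF b] etriD(5)[OF t] refl] by blast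
  show ?thesis using a push_zero[OF o(1) a(1)] by simp
qed

lemma L2: assumes t: "etri X A B C x y d" and f: "f \<in> morph X W C"
  and z: "pullE X A f d = ezero X W A"
  shows "\<exists>g\<in>morph X W B. cmp X y g = f"
proof -
  have oA: "A \<in> ob X" and oW: "W \<in> ob X" using etriD[OF t] morphD[OF f] by auto
  obtain S iA iW pA pW where b: "biprod X A W S iA iW pA pW" and t2: "etri X A S W iA pW (ezero X W A)"
    using split_tri[OF oA oW] by blast
  have "pushE X W (idm X A) (ezero X W A) = pullE X A f d"
    using z push_id[OF oW oA ezero_Ext[OF oW oA]] by simp
  then obtain bb where bb: "bb \<in> morph X S B" "cmp X f pW = cmp X y bb"
    using realmor[OF t2 t id_morph[OF oA] f] by blast
  have g: "cmp X bb iW \<in> morph X W B" using cmp_morph[OF biprodD(2)[OF b] bb(1)] .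
  have "cmp X y (cmp X bb iW) = cmp X (cmp X y bb) iW"
    using assoc[OF biprodD(2)[OF b] bb(1) etriD(5)[OF t]] .
  also have "\<dots> = cmp X (cmp X f pW) iW" using bb by simp
  also have "\<dots> = cmp X f (cmp X pW iW)"
    using assoc[OF biprodD(2)[OF b] biprodD(4)[OF b] f] by simp
  also have "\<dots> = f" using biprodD(6)[OF b] id_r[OF f] by simp
  finally show ?thesis using g by blast
qed

lemma L2': assumes t: "etri X A B C x y d" and f: "f \<in> morph X A V"
  and z: "pushE X C f d = ezero X C V"
  shows "\<exists>g\<in>morph X B V. cmp X g x = f"
proof -
  have oC: "C \<in> ob X" and oV: "V \<in> ob X" using etriD[OF t] morphD[OF f] by auto
  obtain S iV iC pV pC where b: "biprod X V C S iV iC pV pC" and t2: "etri X V S C iV pC (ezero X C V)"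
    using split_tri[OF oV oC] by blast
  have "pushE X C f d = pullE X V (idm X C) (ezero X C V)"
    using z pull_id[OF oC oV ezero_Ext[OF oC oV]] by simp
  then obtain bb where bb: "bb \<in> morph X B S" "cmp X bb x = cmp X iV f"
    using realmor[OF t t2 f id_morph[OF oC]] by blast
  have g: "cmp X pV bb \<in> morph X B V" using cmp_morph[OF bb(1) biprodD(3)[OF b]] .
  have "cmp X (cmp X pV bb) x = cmp X pV (cmp X bb x)"
    using assoc[OF etriD(4)[OF t] bb(1) biprodD(3)[OF b]] by simp
  also have "\<dots> = cmp X pV (cmp X iV f)" using bb by simp
  also have "\<dots> = cmp X (cmp X pV iV) f"
    using assoc[OF f biprodD(1)[OF b] biprodD(3)[OF b]] .
  also have "\<dots> = f" using biprodD(5)[OF b] id_l[OF f] by simp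
  finally show ?thesis using g by blast
qed

lemma L3: assumes t: "etri X A B C x y d" and d': "d' \<in> Ext X W A"
  and W: "W \<in> ob X" and z: "pushE X W x d' = ezero X W B"
  shows "\<exists>w\<in>morph X W C. d' = pullE X A w d"
proof -
  have oA: "A \<in> ob X" using etriD[OF t] by auto
  obtain B' x' y' where t': "etri X A B' W x' y' d'" using realize[OF W oA d'] by blast
  obtain g where g: "g \<in> morph X B' B" "cmp X g x' = x"
    using L2'[OF t' etriD(4)[OF t] z] by blast
  have "cmp X g x' = cmp X x (idm X A)" using g id_r[OF etriD(4)[OF t]] by simp
  then obtain c where c: "c \<in> morph X W C" "pushE X W (idm X A) d' = pullE X A c d"
    using ET3'[OF t' t id_morph[OF oA] g(1)] by blast
  then show ?thesis using push_id[OF W oA d'] by auto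
qed

lemma L3': assumes t: "etri X A B C x y d" and d': "d' \<in> Ext X C W"
  and W: "W \<in> ob X" and z: "pullE X W y d' = ezero X B W"
  shows "\<exists>g\<in>morph X A W. d' = pushE X C g d"
proof -
  have oC: "C \<in> ob X" using etriD[OF t] by auto
  obtain B' x' y' where t': "etri X W B' C x' y' d'" using realize[OF oC W d'] by blast
  obtain h where h: "h \<in> morph X B B'" "cmp X y' h = y"
    using L2[OF t' etriD(5)[OF t] z] by blast
  have "cmp X (idm X C) y = cmp X y' h" using h id_l[OF etriD(5)[OF t]] by simp
  then obtain a where a: "a \<in> morph X A W" "pushE X C a d = pullE X W (idm X C) d'"
    using ET3op'[OF t t' h(1) id_morph[OF oC]] by blast
  then show ?thesis using pull_id[OF oC W d'] by auto
qed

end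



definition FJ :: "('o,'m,'e) extri_data \<Rightarrow> 'm set \<Rightarrow> 'o \<Rightarrow> 'o \<Rightarrow> 'e set" where
  "FJ X J C A = {d \<in> Ext X C A. \<forall>k\<in>J. src X k = A \<longrightarrow> pushE X C k d = ezero X C (tgt X k)}"

definition FI :: "('o,'m,'e) extri_data \<Rightarrow> 'm set \<Rightarrow> 'o \<Rightarrow> 'o \<Rightarrow> 'e set" where
  "FI X I C A = {d \<in> Ext X C A. \<forall>i\<in>I. tgt X i = C \<longrightarrow> pullE X A i d = ezero X (src X i) A}"

locale cpair = extc +
  fixes I J
  assumes cp: "cotorsion_pair X I J"
begin

lemma I_eq: "I = perp_left X J" using cp unfolding cotorsion_pair_def by blast
lemma J_eq: "J = perp_right X I" using cp unfolding cotorsion_pair_def by blast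
lemma idI: "is_ideal X I" using cp unfolding cotorsion_pair_def by blast
lemma idJ: "is_ideal X J" using cp unfolding cotorsion_pair_def by blast

lemma I_mor: "i \<in> I \<Longrightarrow> i \<in> mor X" using idI unfolding is_ideal_def by blast
lemma J_mor: "j \<in> J \<Longrightarrow> j \<in> mor X" using idJ unfolding is_ideal_def by blast

lemma I_cmp: "f \<in> I \<Longrightarrow> f \<in> morph X A B \<Longrightarrow> g \<in> morph X B C \<Longrightarrow> cmp X g f \<in> I"
  using idI[unfolded is_ideal_def, THEN conjunct2, THEN conjunct2, THEN conjunct2, THEN conjunct1]
  by blast
lemma J_cmp: "f \<in> J \<Longrightarrow> f \<in> morph X A B \<Longrightarrow> h \<in> morph X C A \<Longrightarrow> cmp X f h \<in> J"
  using idJ[unfolded is_ideal_def, THEN conjunct2, THEN conjunct2, THEN conjunct2, THEN conjunct2]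
  by blast

lemma perp: assumes "j \<in> J" "m \<in> I" "d \<in> Ext X (tgt X m) (src X j)"
  shows "pullE X (tgt X j) m (pushE X (tgt X m) j d) = ezero X (src X m) (tgt X j)"
proof -
  have "j \<in> perp_right X I" using assms(1) J_eq by simp
  then show ?thesis using assms(2,3) unfolding perp_right_def by blast
qed

lemma inI: assumes "g \<in> mor X"
  "\<And>m d. m \<in> J \<Longrightarrow> d \<in> Ext X (tgt X g) (src X m) \<Longrightarrow>
     pullE X (tgt X m) g (pushE X (tgt X g) m d) = ezero X (src X g) (tgt X m)"
  shows "g \<in> I"
proof -
  have "g \<in> perp_left X J" unfolding perp_left_def using assms by blast
  then show ?thesis using I_eq by simp
qed

lemma inJ: assumes "g \<in> mor X"
  "\<And>m d. m \<in> I \<Longrightarrow> d \<in> Ext X (tgt X m) (src X g) \<Longrightarrow>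
     pullE X (tgt X g) m (pushE X (tgt X m) g d) = ezero X (src X m) (tgt X g)"
  shows "g \<in> J"
proof -
  have "g \<in> perp_right X I" unfolding perp_right_def using assms by blast
  then show ?thesis using J_eq by simp
qed

lemma perpL_I: "perp_left X J = I" using I_eq by simp
lemma perpR_J: "perp_right X I = J" using J_eq by simp

section \<open>Salce-type lemmas\<close>

lemma pre_env: assumes pre: "spec_precovering X I" and ei: "enough_injectives X"
  shows "spec_preenveloping X J"
  unfolding spec_preenveloping_def
proof
  fix A assume A: "A \<in> ob X"
  obtain E C x y \<delta> where inj: "injective_obj X E" and t: "etri X A E C x y \<delta>"
    using ei A unfolding enough_injectives_def by blast
  have C: "C \<in> ob X" using etriD[OF t] by auto
  obtain i where sp: "spec_precover X I C i" using pre C unfolding spec_precovering_def by blast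
  have iI: "i \<in> I" and ti: "tgt X i = C" using sp unfolding spec_precover_def by auto
  obtain A0 B0 x0 y0 \<delta>0 A' x' \<delta>' j b where t0: "etri X A0 B0 C x0 y0 \<delta>0"
    and t': "etri X A' (src X i) C x' i \<delta>'"
    and tm: "tri_mor X A0 B0 C x0 y0 \<delta>0 A' (src X i) C x' i \<delta>' j b (idm X C)"
    and jJ0: "j \<in> perp_right X I"
    using sp unfolding spec_precover_def by blast
  have jJ: "j \<in> J" using jJ0 J_eq by simp
  have jm: "j \<in> morph X A0 A'" using tm unfolding tri_mor_def by blast
  have "pushE X C j \<delta>0 = pullE X A' (idm X C) \<delta>'" using tm unfolding tri_mor_def by blast
  then have d'eq: "\<delta>' = pushE X C j \<delta>0" using pull_id[OF C _ etriD(6)[OF t']] etriD[OF t'] by simp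
  define Xs where "Xs = src X i"
  have im: "i \<in> morph X Xs C" using etriD(5)[OF t'] Xs_def by simp
  define \<delta>1 where "\<delta>1 = pullE X A i \<delta>"
  have d1: "\<delta>1 \<in> Ext X Xs A" unfolding \<delta>1_def using pull_Ext[OF A im etriD(6)[OF t]] .
  have oXs: "Xs \<in> ob X" using morphD[OF im] by simp
  obtain Z e y1 where t1: "etri X A Z Xs e y1 \<delta>1" using realize[OF oXs A d1] by blast
  have em: "e \<in> morph X A Z" using etriD[OF t1] by simp
  have "pushE X Xs (idm X A) \<delta>1 = pullE X A i \<delta>" using push_id[OF oXs A d1] \<delta>1_def by simp
  then obtain bb where bb: "bb \<in> morph X Z E" "cmp X bb e = cmp X x (idm X A)" "cmp X i y1 = cmp X y bb"
    using realmor[OF t1 t id_morph[OF A] im] by blast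
  have tm2: "tri_mor X A Z Xs e y1 \<delta>1 A E C x y \<delta> (idm X A) bb i"
    unfolding tri_mor_def using id_morph[OF A] bb im push_id[OF oXs A d1] \<delta>1_def by simp
  have eJ: "e \<in> J"
  proof (rule inJ)
    show "e \<in> mor X" using morphD[OF em] by simp
    fix m d assume mI: "m \<in> I" and d: "d \<in> Ext X (tgt X m) (src X e)"
    define V W where "V = src X m" and "W = tgt X m"
    have mm: "m \<in> morph X V W" using mor_morph[OF I_mor[OF mI]] V_def W_def by simp
    have oW: "W \<in> ob X" and oV: "V \<in> ob X" using morphD[OF mm] by auto
    have dW: "d \<in> Ext X W A" using d W_def morphD(4)[OF em] by simp
    have "pushE X W x d \<in> Ext X W E" using push_Ext[OF oW etriD(4)[OF t] dW] .
    then have "pushE X W x d = ezero X W E" using inj oW unfolding injective_obj_def by blast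
    then obtain w where wm: "w \<in> morph X W C" and dw: "d = pullE X A w \<delta>"
      using L3[OF t dW oW] by blast
    define n where "n = cmp X w m"
    have nm: "n \<in> morph X V C" unfolding n_def using cmp_morph[OF mm wm] .
    have nI: "n \<in> I" unfolding n_def using I_cmp[OF mI mm wm] .
    have "pullE X (tgt X j) n (pushE X (tgt X n) j \<delta>0) = ezero X (src X n) (tgt X j)"
      using perp[OF jJ nI] etriD(6)[OF t0] morphD[OF nm] morphD[OF jm] by simp
    then have "pullE X A' n \<delta>' = ezero X V A'" using d'eq morphD[OF nm] morphD[OF jm] by simp
    then obtain g where gm: "g \<in> morph X V Xs" and gi: "cmp X i g = n"
      using L2[OF t' nm] Xs_def by auto
    have "pullE X (tgt X e) m (pushE X (tgt X m) e d) = pullE X Z m (pushE X W e d)"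
      using morphD[OF em] W_def by simp
    also have "\<dots> = pushE X V e (pullE X A m d)" using pull_push[OF em mm dW] .
    also have "pullE X A m d = pullE X A n \<delta>"
      unfolding dw n_def using pull_cmp[OF A wm mm etriD(6)[OF t]] by simp
    also have "\<dots> = pullE X A g \<delta>1"
      unfolding \<delta>1_def using pull_cmp[OF A im gm etriD(6)[OF t]] gi by simp
    also have "pushE X V e (pullE X A g \<delta>1) = pullE X Z g (pushE X Xs e \<delta>1)"
      using pull_push[OF em gm d1] by simp
    also have "\<dots> = ezero X V Z" using L1a[OF t1] pull_zero[OF morphD(2)[OF em] gm] by simp
    finally show "pullE X (tgt X e) m (pushE X (tgt X m) e d) = ezero X (src X m) (tgt X e)"
      using V_def morphD[OF em] by simp
  qed
  have "spec_preenvelope X J A e"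
    unfolding spec_preenvelope_def
    using eJ morphD[OF em] t1 t tm2 iI perpL_I by blast
  then show "\<exists>e. spec_preenvelope X J A e" by blast
qed

lemma env_pre: assumes env: "spec_preenveloping X J" and ep: "enough_projectives X"
  shows "spec_precovering X I"
  unfolding spec_precovering_def
proof
  fix C assume C: "C \<in> ob X"
  obtain K P x y \<delta> where proj: "projective_obj X P" and t: "etri X K P C x y \<delta>"
    using ep C unfolding enough_projectives_def by blast
  have K: "K \<in> ob X" using etriD[OF t] by auto
  obtain e where sp: "spec_preenvelope X J K e" using env K unfolding spec_preenveloping_def by blast
  have eJ: "e \<in> J" and se: "src X e = K" using sp unfolding spec_preenvelope_def by auto
  obtain Y ye de B0 C0 x0 y0 d0 b j where te: "etri X K (tgt X e) Y e ye de"
    and t0: "etri X K B0 C0 x0 y0 d0"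
    and tm: "tri_mor X K (tgt X e) Y e ye de K B0 C0 x0 y0 d0 (idm X K) b j"
    and jI0: "j \<in> perp_left X J"
    using sp unfolding spec_preenvelope_def by blast
  have jI: "j \<in> I" using jI0 I_eq by simp
  have jm: "j \<in> morph X Y C0" using tm unfolding tri_mor_def by blast
  have oY: "Y \<in> ob X" using etriD[OF te] by simp
  have "pushE X Y (idm X K) de = pullE X K j d0" using tm unfolding tri_mor_def by blast
  then have deeq: "de = pullE X K j d0" using push_id[OF oY K etriD(6)[OF te]] by simp
  define T where "T = tgt X e"
  have em: "e \<in> morph X K T" using etriD(4)[OF te] T_def by simp
  define \<delta>1 where "\<delta>1 = pushE X C e \<delta>"
  have d1: "\<delta>1 \<in> Ext X C T" unfolding \<delta>1_def using push_Ext[OF C em etriD(6)[OF t]] .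
  have oT: "T \<in> ob X" using morphD[OF em] by simp
  obtain Z x1 y1 where t1: "etri X T Z C x1 y1 \<delta>1" using realize[OF C oT d1] by blast
  have ym: "y1 \<in> morph X Z C" using etriD[OF t1] by simp
  have "pushE X C e \<delta> = pullE X T (idm X C) \<delta>1" using pull_id[OF C oT d1] \<delta>1_def by simp
  then obtain bb where bb: "bb \<in> morph X P Z" "cmp X bb x = cmp X x1 e" "cmp X (idm X C) y = cmp X y1 bb"
    using realmor[OF t t1 em id_morph[OF C]] by blast
  have tm2: "tri_mor X K P C x y \<delta> T Z C x1 y1 \<delta>1 e bb (idm X C)"
    unfolding tri_mor_def using id_morph[OF C] bb em pull_id[OF C oT d1] \<delta>1_def by simp
  have yI: "y1 \<in> I"
  proof (rule inI)
    show "y1 \<in> mor X" using morphD[OF ym] by simp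
    fix m d assume mJ: "m \<in> J" and d: "d \<in> Ext X (tgt X y1) (src X m)"
    define U V where "U = src X m" and "V = tgt X m"
    have mm: "m \<in> morph X U V" using mor_morph[OF J_mor[OF mJ]] U_def V_def by simp
    have oU: "U \<in> ob X" and oV: "V \<in> ob X" using morphD[OF mm] by auto
    have dU: "d \<in> Ext X C U" using d U_def morphD(5)[OF ym] by simp
    have "pullE X U y d \<in> Ext X P U" using pull_Ext[OF oU etriD(5)[OF t] dU] .
    then have "pullE X U y d = ezero X P U" using proj oU unfolding projective_obj_def by blast
    then obtain w where wm: "w \<in> morph X K U" and dw: "d = pushE X C w \<delta>"
      using L3'[OF t dU oU] by blast
    define n where "n = cmp X m w"
    have nm: "n \<in> morph X K V" unfolding n_def using cmp_morph[OF wm mm] .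
    have nJ: "n \<in> J" unfolding n_def using J_cmp[OF mJ mm wm] .
    have "pullE X (tgt X n) j (pushE X (tgt X j) n d0) = ezero X (src X j) (tgt X n)"
      using perp[OF nJ jI] etriD(6)[OF t0] morphD[OF nm] morphD[OF jm] by simp
    then have "pushE X Y n de = ezero X Y V"
      using deeq pull_push[OF nm jm etriD(6)[OF t0]] morphD[OF nm] morphD[OF jm] by simp
    then obtain g where gm: "g \<in> morph X T V" and ge: "cmp X g e = n"
      using L2'[OF te nm] T_def by auto
    have "pullE X (tgt X m) y1 (pushE X (tgt X y1) m d) = pullE X V y1 (pushE X C m d)"
      using morphD[OF ym] V_def by simp
    also have "pushE X C m d = pushE X C n \<delta>"
      unfolding dw n_def using push_cmp[OF C wm mm etriD(6)[OF t]] by simp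
    also have "\<dots> = pushE X C g \<delta>1"
      unfolding \<delta>1_def using push_cmp[OF C em gm etriD(6)[OF t]] ge by simp
    also have "pullE X V y1 (pushE X C g \<delta>1) = pushE X Z g (pullE X T y1 \<delta>1)"
      using pull_push[OF gm ym d1] .
    also have "\<dots> = ezero X Z V" using L1b[OF t1] push_zero[OF etriD(2)[OF t1] gm] by simp
    finally show "pullE X (tgt X m) y1 (pushE X (tgt X y1) m d) = ezero X (src X y1) (tgt X m)"
      using V_def morphD[OF ym] by simp
  qed
  have "spec_precover X I C y1"
    unfolding spec_precover_def
    using yI morphD[OF ym] t t1 tm2 eJ perpR_J by blast
  then show "\<exists>i. spec_precover X I C i" by blast
qed

end



context cpair
begin

lemma G1: assumes esi: "enough_spec_inj X F" and IP: "I = Ph X F"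
  shows "spec_preenveloping X J"
  unfolding spec_preenveloping_def
proof
  fix A assume A: "A \<in> ob X"
  obtain B C e y d B' C' x' y' d' b \<phi> where ft: "Ftri X F A B C e y d" and eF: "e \<in> F_inj X F"
    and t': "etri X A B' C' x' y' d'"
    and tm: "tri_mor X A B C e y d A B' C' x' y' d' (idm X A) b \<phi>" and ph: "\<phi> \<in> Ph X F"
    using bspec[OF esi[unfolded enough_spec_inj_def] A] by metis
  have te: "etri X A B C e y d" using ft unfolding Ftri_def by simp
  have em: "e \<in> morph X A B" using etriD[OF te] by simp
  have eJ: "e \<in> J"
  proof (rule inJ)
    show "e \<in> mor X" using morphD[OF em] by simp
    fix m d0 assume mI: "m \<in> I" and d0: "d0 \<in> Ext X (tgt X m) (src X e)"
    have mm: "m \<in> morph X (src X m) (tgt X m)" using mor_morph[OF I_mor[OF mI]] .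
    have d0': "d0 \<in> Ext X (tgt X m) A" using d0 morphD[OF em] by simp
    have "m \<in> Ph X F" using mI IP by simp
    then have inF: "pullE X A m d0 \<in> F (src X m) A" using A d0' unfolding Ph_def by blast
    have "pushE X (src X m) e (pullE X A m d0) = ezero X (src X m) (tgt X e)"
      using eF inF morphD[OF mm] morphD[OF em] unfolding F_inj_def by auto
    then show "pullE X (tgt X e) m (pushE X (tgt X m) e d0) = ezero X (src X m) (tgt X e)"
      using pull_push[OF em mm d0'] morphD[OF em] by simp
  qed
  have "\<phi> \<in> perp_left X J" using ph IP perpL_I by simp
  then have "spec_preenvelope X J A e"
    unfolding spec_preenvelope_def using eJ morphD[OF em] te t' tm by blast
  then show "\<exists>e. spec_preenvelope X J A e" by blast
qed

lemma G2: assumes esi: "enough_spec_inj X F" and JP: "J = F_inj X F"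
  shows "spec_preenveloping X J"
  unfolding spec_preenveloping_def
proof
  fix A assume A: "A \<in> ob X"
  obtain B C e y d B' C' x' y' d' b \<phi> where ft: "Ftri X F A B C e y d" and eF: "e \<in> F_inj X F"
    and t': "etri X A B' C' x' y' d'"
    and tm: "tri_mor X A B C e y d A B' C' x' y' d' (idm X A) b \<phi>" and ph: "\<phi> \<in> Ph X F"
    using bspec[OF esi[unfolded enough_spec_inj_def] A] by metis
  have te: "etri X A B C e y d" using ft unfolding Ftri_def by simp
  have em: "e \<in> morph X A B" using etriD[OF te] by simp
  have eJ: "e \<in> J" using eF JP by simp
  have phm: "\<phi> \<in> mor X" using ph unfolding Ph_def by blast
  have "\<phi> \<in> I"
  proof (rule inI[OF phm])
    fix m d0 assume mJ: "m \<in> J" and d0: "d0 \<in> Ext X (tgt X \<phi>) (src X m)"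
    have mm: "m \<in> morph X (src X m) (tgt X m)" using mor_morph[OF J_mor[OF mJ]] .
    have inF: "pullE X (src X m) \<phi> d0 \<in> F (src X \<phi>) (src X m)"
      using ph d0 morphD[OF mm] unfolding Ph_def by blast
    have "m \<in> F_inj X F" using mJ JP by simp
    then have "pushE X (src X \<phi>) m (pullE X (src X m) \<phi> d0) = ezero X (src X \<phi>) (tgt X m)"
      using inF mor_ob[OF phm] unfolding F_inj_def by blast
    then show "pullE X (tgt X m) \<phi> (pushE X (tgt X \<phi>) m d0) = ezero X (src X \<phi>) (tgt X m)"
      using pull_push[OF mm mor_morph[OF phm] d0] by simp
  qed
  then have "\<phi> \<in> perp_left X J" using perpL_I by simp
  then have "spec_preenvelope X J A e"
    unfolding spec_preenvelope_def using eJ morphD[OF em] te t' tm by blast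
  then show "\<exists>e. spec_preenvelope X J A e" by blast
qed

lemma G4: "Ph X (FJ X J) = I"
proof
  show "Ph X (FJ X J) \<subseteq> I"
  proof
    fix \<phi> assume ph: "\<phi> \<in> Ph X (FJ X J)"
    have phm: "\<phi> \<in> mor X" using ph unfolding Ph_def by blast
    show "\<phi> \<in> I"
    proof (rule inI[OF phm])
      fix m d0 assume mJ: "m \<in> J" and d0: "d0 \<in> Ext X (tgt X \<phi>) (src X m)"
      have mm: "m \<in> morph X (src X m) (tgt X m)" using mor_morph[OF J_mor[OF mJ]] .
      have "pullE X (src X m) \<phi> d0 \<in> FJ X J (src X \<phi>) (src X m)"
        using ph d0 morphD[OF mm] unfolding Ph_def by blast
      then have "pushE X (src X \<phi>) m (pullE X (src X m) \<phi> d0) = ezero X (src X \<phi>) (tgt X m)"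
        using mJ unfolding FJ_def by blast
      then show "pullE X (tgt X m) \<phi> (pushE X (tgt X \<phi>) m d0) = ezero X (src X \<phi>) (tgt X m)"
        using pull_push[OF mm mor_morph[OF phm] d0] by simp
    qed
  qed
  show "I \<subseteq> Ph X (FJ X J)"
  proof
    fix \<phi> assume phI: "\<phi> \<in> I"
    have phm: "\<phi> \<in> mor X" using I_mor[OF phI] .
    have "\<forall>A\<in>ob X. \<forall>d\<in>Ext X (tgt X \<phi>) A. pullE X A \<phi> d \<in> FJ X J (src X \<phi>) A"
    proof (intro ballI)
      fix A d assume A: "A \<in> ob X" and d: "d \<in> Ext X (tgt X \<phi>) A"
      have "pullE X A \<phi> d \<in> Ext X (src X \<phi>) A" using pull_Ext[OF A mor_morph[OF phm] d] .
      moreover have "\<forall>k\<in>J. src X k = A \<longrightarrow> pushE X (src X \<phi>) k (pullE X A \<phi> d) = ezero X (src X \<phi>) (tgt X k)"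
      proof (intro ballI impI)
        fix k assume kJ: "k \<in> J" and sk: "src X k = A"
        have km: "k \<in> morph X A (tgt X k)" using mor_morph[OF J_mor[OF kJ]] sk by simp
        have "pushE X (src X \<phi>) k (pullE X A \<phi> d) = pullE X (tgt X k) \<phi> (pushE X (tgt X \<phi>) k d)"
          using pull_push[OF km mor_morph[OF phm] d] by simp
        also have "\<dots> = ezero X (src X \<phi>) (tgt X k)" using perp[OF kJ phI] d sk by simp
        finally show "pushE X (src X \<phi>) k (pullE X A \<phi> d) = ezero X (src X \<phi>) (tgt X k)" .
      qed
      ultimately show "pullE X A \<phi> d \<in> FJ X J (src X \<phi>) A" unfolding FJ_def by blast
    qed
    then show "\<phi> \<in> Ph X (FJ X J)" using phm unfolding Ph_def by blast
  qed
qed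

lemma FJ_pull: assumes "i \<in> I" "i \<in> morph X C' C" "A \<in> ob X" "d \<in> Ext X C A"
  shows "pullE X A i d \<in> FJ X J C' A"
proof -
  have "pullE X A i d \<in> Ext X C' A" using pull_Ext[OF assms(3,2,4)] .
  moreover have "\<forall>k\<in>J. src X k = A \<longrightarrow> pushE X C' k (pullE X A i d) = ezero X C' (tgt X k)"
  proof (intro ballI impI)
    fix k assume kJ: "k \<in> J" and sk: "src X k = A"
    have km: "k \<in> morph X A (tgt X k)" using mor_morph[OF J_mor[OF kJ]] sk by simp
    have "pushE X C' k (pullE X A i d) = pullE X (tgt X k) i (pushE X C k d)"
      using pull_push[OF km assms(2,4)] by simp
    also have "\<dots> = ezero X C' (tgt X k)" using perp[OF kJ assms(1)] assms(4) sk morphD[OF assms(2)] by simp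
    finally show "pushE X C' k (pullE X A i d) = ezero X C' (tgt X k)" .
  qed
  ultimately show ?thesis unfolding FJ_def by blast
qed

lemma G5: "F_inj X (FJ X J) = J"
proof
  show "F_inj X (FJ X J) \<subseteq> J"
  proof
    fix g assume gF: "g \<in> F_inj X (FJ X J)"
    have gm: "g \<in> mor X" using gF unfolding F_inj_def by blast
    show "g \<in> J"
    proof (rule inJ[OF gm])
      fix m d0 assume mI: "m \<in> I" and d0: "d0 \<in> Ext X (tgt X m) (src X g)"
      have mm: "m \<in> morph X (src X m) (tgt X m)" using mor_morph[OF I_mor[OF mI]] .
      have "pullE X (src X g) m d0 \<in> FJ X J (src X m) (src X g)"
        using FJ_pull[OF mI mm _ d0] mor_ob[OF gm] by blast
      then have "pushE X (src X m) g (pullE X (src X g) m d0) = ezero X (src X m) (tgt X g)"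
        using gF morphD[OF mm] unfolding F_inj_def by blast
      then show "pullE X (tgt X g) m (pushE X (tgt X m) g d0) = ezero X (src X m) (tgt X g)"
        using pull_push[OF mor_morph[OF gm] mm d0] by simp
    qed
  qed
  show "J \<subseteq> F_inj X (FJ X J)"
    unfolding F_inj_def FJ_def using J_mor by blast
qed

lemma G8: "Ph X (upstar X I) = I"
proof
  show "Ph X (upstar X I) \<subseteq> I"
  proof
    fix \<phi> assume ph: "\<phi> \<in> Ph X (upstar X I)"
    have phm: "\<phi> \<in> mor X" using ph unfolding Ph_def by blast
    show "\<phi> \<in> I"
    proof (rule inI[OF phm])
      fix m d0 assume mJ: "m \<in> J" and d0: "d0 \<in> Ext X (tgt X \<phi>) (src X m)"
      have mm: "m \<in> morph X (src X m) (tgt X m)" using mor_morph[OF J_mor[OF mJ]] .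
      have "pullE X (src X m) \<phi> d0 \<in> upstar X I (src X \<phi>) (src X m)"
        using ph d0 morphD[OF mm] unfolding Ph_def by blast
      then obtain i C d' where eq: "pullE X (src X m) \<phi> d0 = pullE X (src X m) i d'"
        and iI: "i \<in> I" and im: "i \<in> morph X (src X \<phi>) C" and d': "d' \<in> Ext X C (src X m)"
        unfolding upstar_def by blast
      have "pullE X (tgt X m) \<phi> (pushE X (tgt X \<phi>) m d0) = pushE X (src X \<phi>) m (pullE X (src X m) \<phi> d0)"
        using pull_push[OF mm mor_morph[OF phm] d0] .
      also have "\<dots> = pushE X (src X \<phi>) m (pullE X (src X m) i d')" using eq by simp
      also have "\<dots> = pullE X (tgt X m) i (pushE X C m d')" using pull_push[OF mm im d'] by simp
      also have "\<dots> = ezero X (src X i) (tgt X m)" using perp[OF mJ iI] d' morphD[OF im] by simp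
      finally show "pullE X (tgt X m) \<phi> (pushE X (tgt X \<phi>) m d0) = ezero X (src X \<phi>) (tgt X m)"
        using morphD[OF im] by simp
    qed
  qed
  show "I \<subseteq> Ph X (upstar X I)"
  proof
    fix \<phi> assume phI: "\<phi> \<in> I"
    have phm: "\<phi> \<in> mor X" using I_mor[OF phI] .
    show "\<phi> \<in> Ph X (upstar X I)"
      unfolding Ph_def upstar_def using phm phI mor_morph[OF phm] by blast
  qed
qed

lemma G9: "F_inj X (upstar X I) = J"
proof
  show "F_inj X (upstar X I) \<subseteq> J"
  proof
    fix g assume gF: "g \<in> F_inj X (upstar X I)"
    have gm: "g \<in> mor X" using gF unfolding F_inj_def by blast
    show "g \<in> J"
    proof (rule inJ[OF gm])
      fix m d0 assume mI: "m \<in> I" and d0: "d0 \<in> Ext X (tgt X m) (src X g)"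
      have mm: "m \<in> morph X (src X m) (tgt X m)" using mor_morph[OF I_mor[OF mI]] .
      have "pullE X (src X g) m d0 \<in> upstar X I (src X m) (src X g)"
        unfolding upstar_def using mI mm mor_ob[OF gm] d0 by blast
      then have "pushE X (src X m) g (pullE X (src X g) m d0) = ezero X (src X m) (tgt X g)"
        using gF morphD[OF mm] unfolding F_inj_def by blast
      then show "pullE X (tgt X g) m (pushE X (tgt X m) g d0) = ezero X (src X m) (tgt X g)"
        using pull_push[OF mor_morph[OF gm] mm d0] by simp
    qed
  qed
  show "J \<subseteq> F_inj X (upstar X I)"
  proof
    fix j assume jJ: "j \<in> J"
    have jm: "j \<in> mor X" using J_mor[OF jJ] .
    have "\<forall>C\<in>ob X. \<forall>d\<in>upstar X I C (src X j). pushE X C j d = ezero X C (tgt X j)"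
    proof (intro ballI)
      fix C d assume C: "C \<in> ob X" and d: "d \<in> upstar X I C (src X j)"
      then obtain i C'' d' where eq: "d = pullE X (src X j) i d'"
        and iI: "i \<in> I" and im: "i \<in> morph X C C''" and d': "d' \<in> Ext X C'' (src X j)"
        unfolding upstar_def by blast
      have "pushE X C j d = pullE X (tgt X j) i (pushE X C'' j d')"
        using eq pull_push[OF mor_morph[OF jm] im d'] by simp
      also have "\<dots> = ezero X C (tgt X j)" using perp[OF jJ iI] d' morphD[OF im] by simp
      finally show "pushE X C j d = ezero X C (tgt X j)" .
    qed
    then show "j \<in> F_inj X (upstar X I)" using jm unfolding F_inj_def by blast
  qed
qed

lemma G67: assumes env: "spec_preenveloping X J"
  and Fcl: "\<And>Y C A j d'. j \<in> I \<Longrightarrow> j \<in> morph X Y C \<Longrightarrow> A \<in> ob X \<Longrightarrow> d' \<in> Ext X C A \<Longrightarrow> pullE X A j d' \<in> F Y A"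
  and FinjF: "F_inj X F = J" and PhF: "Ph X F = I"
  shows "enough_spec_inj X F"
  unfolding enough_spec_inj_def
proof
  fix A assume A: "A \<in> ob X"
  obtain e where sp: "spec_preenvelope X J A e" using env A unfolding spec_preenveloping_def by blast
  have eJ: "e \<in> J" using sp unfolding spec_preenvelope_def by auto
  obtain Y y d B C x' y' d' b j where te: "etri X A (tgt X e) Y e y d"
    and t0: "etri X A B C x' y' d'"
    and tm: "tri_mor X A (tgt X e) Y e y d A B C x' y' d' (idm X A) b j"
    and jI0: "j \<in> perp_left X J"
    using sp unfolding spec_preenvelope_def by blast
  have jI: "j \<in> I" using jI0 I_eq by simp
  have jm: "j \<in> morph X Y C" using tm unfolding tri_mor_def by blast
  have "pushE X Y (idm X A) d = pullE X A j d'" using tm unfolding tri_mor_def by blast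
  then have deq: "d = pullE X A j d'" using push_id[OF etriD(3)[OF te] A etriD(6)[OF te]] by simp
  have "d \<in> F Y A" using deq Fcl[OF jI jm A etriD(6)[OF t0]] by simp
  then have "Ftri X F A (tgt X e) Y e y d" unfolding Ftri_def using te by simp
  then show "\<exists>B C e y d B' C' x' y' d' b \<phi>.
     Ftri X F A B C e y d \<and> e \<in> F_inj X F \<and> etri X A B' C' x' y' d' \<and>
     tri_mor X A B C e y d A B' C' x' y' d' (idm X A) b \<phi> \<and> \<phi> \<in> Ph X F"
    using eJ FinjF t0 tm jI PhF by blast
qed

end



context cpair
begin

lemma H1: assumes esp: "enough_spec_proj X F" and IP: "I = F_proj X F"
  shows "spec_precovering X I"
  unfolding spec_precovering_def
proof
  fix C assume C: "C \<in> ob X"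
  obtain K B x p d K' B' x' y' d' \<psi> b where ft: "Ftri X F K B C x p d" and pF: "p \<in> F_proj X F"
    and t': "etri X K' B' C x' y' d'"
    and tm: "tri_mor X K' B' C x' y' d' K B C x p d \<psi> b (idm X C)" and ps: "\<psi> \<in> Coph X F"
    using bspec[OF esp[unfolded enough_spec_proj_def] C] by metis
  have tp: "etri X K B C x p d" using ft unfolding Ftri_def by simp
  have pm: "p \<in> morph X B C" using etriD[OF tp] by simp
  have psm: "\<psi> \<in> mor X" using ps unfolding Coph_def by blast
  have "\<psi> \<in> J"
  proof (rule inJ[OF psm])
    fix m d0 assume mI: "m \<in> I" and d0: "d0 \<in> Ext X (tgt X m) (src X \<psi>)"
    have mm: "m \<in> morph X (src X m) (tgt X m)" using mor_morph[OF I_mor[OF mI]] .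
    have inF: "pushE X (tgt X m) \<psi> d0 \<in> F (tgt X m) (tgt X \<psi>)"
      using ps d0 morphD[OF mm] unfolding Coph_def by blast
    have "m \<in> F_proj X F" using mI IP by simp
    then show "pullE X (tgt X \<psi>) m (pushE X (tgt X m) \<psi> d0) = ezero X (src X m) (tgt X \<psi>)"
      using inF mor_ob[OF psm] unfolding F_proj_def by blast
  qed
  then have "\<psi> \<in> perp_right X I" using perpR_J by simp
  moreover have "p \<in> I" using pF IP by simp
  ultimately have "spec_precover X I C p"
    unfolding spec_precover_def using morphD[OF pm] tp t' tm by blast
  then show "\<exists>i. spec_precover X I C i" by blast
qed

lemma H2: assumes esp: "enough_spec_proj X F" and JP: "J = Coph X F"
  shows "spec_precovering X I"
  unfolding spec_precovering_def
proof
  fix C assume C: "C \<in> ob X"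
  obtain K B x p d K' B' x' y' d' \<psi> b where ft: "Ftri X F K B C x p d" and pF: "p \<in> F_proj X F"
    and t': "etri X K' B' C x' y' d'"
    and tm: "tri_mor X K' B' C x' y' d' K B C x p d \<psi> b (idm X C)" and ps: "\<psi> \<in> Coph X F"
    using bspec[OF esp[unfolded enough_spec_proj_def] C] by metis
  have tp: "etri X K B C x p d" using ft unfolding Ftri_def by simp
  have pm: "p \<in> morph X B C" using etriD[OF tp] by simp
  have "p \<in> I"
  proof (rule inI)
    show "p \<in> mor X" using morphD[OF pm] by simp
    fix m d0 assume mJ: "m \<in> J" and d0: "d0 \<in> Ext X (tgt X p) (src X m)"
    have mm: "m \<in> morph X (src X m) (tgt X m)" using mor_morph[OF J_mor[OF mJ]] .
    have "m \<in> Coph X F" using mJ JP by simp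
    then have inF: "pushE X (tgt X p) m d0 \<in> F (tgt X p) (tgt X m)"
      using d0 morphD[OF pm] unfolding Coph_def by blast
    then show "pullE X (tgt X m) p (pushE X (tgt X p) m d0) = ezero X (src X p) (tgt X m)"
      using pF morphD[OF mm] unfolding F_proj_def by blast
  qed
  moreover have "\<psi> \<in> perp_right X I" using ps JP perpR_J by simp
  ultimately have "spec_precover X I C p"
    unfolding spec_precover_def using morphD[OF pm] tp t' tm by blast
  then show "\<exists>i. spec_precover X I C i" by blast
qed

lemma FI_push: assumes "j \<in> J" "j \<in> morph X A A'" "C \<in> ob X" "d \<in> Ext X C A"
  shows "pushE X C j d \<in> FI X I C A'"
proof -
  have "pushE X C j d \<in> Ext X C A'" using push_Ext[OF assms(3,2,4)] .
  moreover have "\<forall>i\<in>I. tgt X i = C \<longrightarrow> pullE X A' i (pushE X C j d) = ezero X (src X i) A'"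
  proof (intro ballI impI)
    fix i assume iI: "i \<in> I" and ti: "tgt X i = C"
    show "pullE X A' i (pushE X C j d) = ezero X (src X i) A'"
      using perp[OF assms(1) iI] assms(4) ti morphD[OF assms(2)] by simp
  qed
  ultimately show ?thesis unfolding FI_def by blast
qed

lemma H4: "F_proj X (FI X I) = I"
proof
  show "F_proj X (FI X I) \<subseteq> I"
  proof
    fix p assume pF: "p \<in> F_proj X (FI X I)"
    have pm: "p \<in> mor X" using pF unfolding F_proj_def by blast
    show "p \<in> I"
    proof (rule inI[OF pm])
      fix m d0 assume mJ: "m \<in> J" and d0: "d0 \<in> Ext X (tgt X p) (src X m)"
      have mm: "m \<in> morph X (src X m) (tgt X m)" using mor_morph[OF J_mor[OF mJ]] .
      have "pushE X (tgt X p) m d0 \<in> FI X I (tgt X p) (tgt X m)"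
        using FI_push[OF mJ mm _ d0] mor_ob[OF pm] by blast
      then show "pullE X (tgt X m) p (pushE X (tgt X p) m d0) = ezero X (src X p) (tgt X m)"
        using pF morphD[OF mm] unfolding F_proj_def by blast
    qed
  qed
  show "I \<subseteq> F_proj X (FI X I)"
    unfolding F_proj_def FI_def using I_mor by blast
qed

lemma H5: "Coph X (FI X I) = J"
proof
  show "Coph X (FI X I) \<subseteq> J"
  proof
    fix g assume gF: "g \<in> Coph X (FI X I)"
    have gm: "g \<in> mor X" using gF unfolding Coph_def by blast
    show "g \<in> J"
    proof (rule inJ[OF gm])
      fix m d0 assume mI: "m \<in> I" and d0: "d0 \<in> Ext X (tgt X m) (src X g)"
      have mm: "m \<in> morph X (src X m) (tgt X m)" using mor_morph[OF I_mor[OF mI]] .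
      have "pushE X (tgt X m) g d0 \<in> FI X I (tgt X m) (tgt X g)"
        using gF d0 morphD[OF mm] unfolding Coph_def by blast
      then show "pullE X (tgt X g) m (pushE X (tgt X m) g d0) = ezero X (src X m) (tgt X g)"
        using mI unfolding FI_def by blast
    qed
  qed
  show "J \<subseteq> Coph X (FI X I)"
  proof
    fix j assume jJ: "j \<in> J"
    have jm: "j \<in> mor X" using J_mor[OF jJ] .
    show "j \<in> Coph X (FI X I)"
      unfolding Coph_def using jm FI_push[OF jJ mor_morph[OF jm]] by blast
  qed
qed

lemma H8: "F_proj X (lowstar X J) = I"
proof
  show "F_proj X (lowstar X J) \<subseteq> I"
  proof
    fix p assume pF: "p \<in> F_proj X (lowstar X J)"
    have pm: "p \<in> mor X" using pF unfolding F_proj_def by blast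
    show "p \<in> I"
    proof (rule inI[OF pm])
      fix m d0 assume mJ: "m \<in> J" and d0: "d0 \<in> Ext X (tgt X p) (src X m)"
      have mm: "m \<in> morph X (src X m) (tgt X m)" using mor_morph[OF J_mor[OF mJ]] .
      have "pushE X (tgt X p) m d0 \<in> lowstar X J (tgt X p) (tgt X m)"
        unfolding lowstar_def using mJ mm mor_ob[OF pm] d0 by blast
      then show "pullE X (tgt X m) p (pushE X (tgt X p) m d0) = ezero X (src X p) (tgt X m)"
        using pF morphD[OF mm] unfolding F_proj_def by blast
    qed
  qed
  show "I \<subseteq> F_proj X (lowstar X J)"
  proof
    fix p assume pI: "p \<in> I"
    have pm: "p \<in> mor X" using I_mor[OF pI] .
    have "\<forall>A\<in>ob X. \<forall>d\<in>lowstar X J (tgt X p) A. pullE X A p d = ezero X (src X p) A"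
    proof (intro ballI)
      fix A d assume A: "A \<in> ob X" and d: "d \<in> lowstar X J (tgt X p) A"
      then obtain j A0 d' where eq: "d = pushE X (tgt X p) j d'"
        and jJ: "j \<in> J" and jm: "j \<in> morph X A0 A" and d': "d' \<in> Ext X (tgt X p) A0"
        unfolding lowstar_def by blast
      show "pullE X A p d = ezero X (src X p) A"
        using eq perp[OF jJ pI] d' morphD[OF jm] by simp
    qed
    then show "p \<in> F_proj X (lowstar X J)" using pm unfolding F_proj_def by blast
  qed
qed

lemma H9: "Coph X (lowstar X J) = J"
proof
  show "Coph X (lowstar X J) \<subseteq> J"
  proof
    fix g assume gF: "g \<in> Coph X (lowstar X J)"
    have gm: "g \<in> mor X" using gF unfolding Coph_def by blast
    show "g \<in> J"
    proof (rule inJ[OF gm])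
      fix m d0 assume mI: "m \<in> I" and d0: "d0 \<in> Ext X (tgt X m) (src X g)"
      have mm: "m \<in> morph X (src X m) (tgt X m)" using mor_morph[OF I_mor[OF mI]] .
      have "pushE X (tgt X m) g d0 \<in> lowstar X J (tgt X m) (tgt X g)"
        using gF d0 morphD[OF mm] unfolding Coph_def by blast
      then obtain j A0 d' where eq: "pushE X (tgt X m) g d0 = pushE X (tgt X m) j d'"
        and jJ: "j \<in> J" and jm: "j \<in> morph X A0 (tgt X g)" and d': "d' \<in> Ext X (tgt X m) A0"
        unfolding lowstar_def by blast
      show "pullE X (tgt X g) m (pushE X (tgt X m) g d0) = ezero X (src X m) (tgt X g)"
        using eq perp[OF jJ mI] d' morphD[OF jm] by simp
    qed
  qed
  show "J \<subseteq> Coph X (lowstar X J)"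
  proof
    fix j assume jJ: "j \<in> J"
    have jm: "j \<in> mor X" using J_mor[OF jJ] .
    show "j \<in> Coph X (lowstar X J)"
      unfolding Coph_def lowstar_def using jm jJ mor_morph[OF jm] by blast
  qed
qed

lemma H67: assumes pre: "spec_precovering X I"
  and Fcl: "\<And>C A A' j d. j \<in> J \<Longrightarrow> j \<in> morph X A A' \<Longrightarrow> C \<in> ob X \<Longrightarrow> d \<in> Ext X C A \<Longrightarrow> pushE X C j d \<in> F C A'"
  and FprojF: "F_proj X F = I" and CophF: "Coph X F = J"
  shows "enough_spec_proj X F"
  unfolding enough_spec_proj_def
proof
  fix C assume C: "C \<in> ob X"
  obtain i where sp: "spec_precover X I C i" using pre C unfolding spec_precovering_def by blast
  have iI: "i \<in> I" and ti: "tgt X i = C" using sp unfolding spec_precover_def by auto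
  obtain A B x y d A' x' d' j b where t: "etri X A B C x y d"
    and t': "etri X A' (src X i) C x' i d'"
    and tm: "tri_mor X A B C x y d A' (src X i) C x' i d' j b (idm X C)"
    and jJ0: "j \<in> perp_right X I"
    using sp unfolding spec_precover_def by blast
  have jJ: "j \<in> J" using jJ0 J_eq by simp
  have jm: "j \<in> morph X A A'" using tm unfolding tri_mor_def by blast
  have "pushE X C j d = pullE X A' (idm X C) d'" using tm unfolding tri_mor_def by blast
  then have deq: "d' = pushE X C j d" using pull_id[OF C etriD(1)[OF t'] etriD(6)[OF t']] by simp
  have "d' \<in> F C A'" using deq Fcl[OF jJ jm C etriD(6)[OF t]] by simp
  then have ft: "Ftri X F A' (src X i) C x' i d'" unfolding Ftri_def using t' by simp
  show "\<exists>K B x p d K' B' x' y' d' \<psi> b.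
     Ftri X F K B C x p d \<and> p \<in> F_proj X F \<and> etri X K' B' C x' y' d' \<and>
     tri_mor X K' B' C x' y' d' K B C x p d \<psi> b (idm X C) \<and> \<psi> \<in> Coph X F"
    using ft iI FprojF t tm jJ CophF by blast
qed

end



lemma hom_kernel:
  assumes "group G" "group H" "h \<in> hom G H" "x \<in> carrier G" "y \<in> carrier G"
    "h x = \<one>\<^bsub>H\<^esub>" "h y = \<one>\<^bsub>H\<^esub>"
  shows "h (inv\<^bsub>G\<^esub> x) = \<one>\<^bsub>H\<^esub>" "h (x \<otimes>\<^bsub>G\<^esub> y) = \<one>\<^bsub>H\<^esub>"
proof -
  interpret group_hom G H h using assms(1-3) by (simp add: group_hom_def group_hom_axioms_def)
  show "h (inv\<^bsub>G\<^esub> x) = \<one>\<^bsub>H\<^esub>" using assms(4,6) by simp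
  show "h (x \<otimes>\<^bsub>G\<^esub> y) = \<one>\<^bsub>H\<^esub>" using assms(4-7) by simp
qed

context cpair
begin

lemma sub_FJ: "additive_subfunctor X (FJ X J)"
  unfolding additive_subfunctor_def
proof (intro conjI ballI allI impI)
  fix C A assume C: "C \<in> ob X" and A: "A \<in> ob X"
  interpret G: group "extg X C A" using ext_group[OF C A] .
  have kz: "\<And>k. k \<in> J \<Longrightarrow> src X k = A \<Longrightarrow> k \<in> morph X A (tgt X k) \<and> tgt X k \<in> ob X"
    using mor_morph J_mor mor_ob by fastforce
  show "subgroup (FJ X J C A) (extg X C A)"
  proof (rule G.subgroupI)
    show "FJ X J C A \<subseteq> carrier (extg X C A)" unfolding FJ_def Ext_def by blast
    have "ezero X C A \<in> FJ X J C A"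
      unfolding FJ_def using ezero_Ext[OF C A] push_zero[OF C] kz by auto
    then show "FJ X J C A \<noteq> {}" by blast
  next
    fix a assume a: "a \<in> FJ X J C A"
    have aE: "a \<in> carrier (extg X C A)" using a unfolding FJ_def Ext_def by blast
    show "inv\<^bsub>extg X C A\<^esub> a \<in> FJ X J C A"
      unfolding FJ_def
    proof (intro CollectI conjI ballI impI)
      show "inv\<^bsub>extg X C A\<^esub> a \<in> Ext X C A" using aE unfolding Ext_def by simp
      fix k assume kJ: "k \<in> J" and sk: "src X k = A"
      have km: "k \<in> morph X A (tgt X k)" and tk: "tgt X k \<in> ob X" using kz[OF kJ sk] by auto
      have "pushE X C k a = ezero X C (tgt X k)" using a kJ sk unfolding FJ_def by blast
      then show "pushE X C k (inv\<^bsub>extg X C A\<^esub> a) = ezero X C (tgt X k)"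
        using hom_kernel(1)[OF ext_group[OF C A] ext_group[OF C tk] push_hom[OF C km] aE aE]
        unfolding ezero_def by simp
    qed
  next
    fix a b assume a: "a \<in> FJ X J C A" and b: "b \<in> FJ X J C A"
    have aE: "a \<in> carrier (extg X C A)" using a unfolding FJ_def Ext_def by blast
    have bE: "b \<in> carrier (extg X C A)" using b unfolding FJ_def Ext_def by blast
    show "a \<otimes>\<^bsub>extg X C A\<^esub> b \<in> FJ X J C A"
      unfolding FJ_def
    proof (intro CollectI conjI ballI impI)
      show "a \<otimes>\<^bsub>extg X C A\<^esub> b \<in> Ext X C A" using aE bE unfolding Ext_def by simp
      fix k assume kJ: "k \<in> J" and sk: "src X k = A"
      have km: "k \<in> morph X A (tgt X k)" and tk: "tgt X k \<in> ob X" using kz[OF kJ sk] by auto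
      have "pushE X C k a = ezero X C (tgt X k)" "pushE X C k b = ezero X C (tgt X k)"
        using a b kJ sk unfolding FJ_def by blast+
      then show "pushE X C k (a \<otimes>\<^bsub>extg X C A\<^esub> b) = ezero X C (tgt X k)"
        using hom_kernel(2)[OF ext_group[OF C A] ext_group[OF C tk] push_hom[OF C km] aE bE]
        unfolding ezero_def by simp
    qed
  qed
next
  fix C A A' a d assume C: "C \<in> ob X" and am: "a \<in> morph X A A'" and d: "d \<in> FJ X J C A"
  have dE: "d \<in> Ext X C A" using d unfolding FJ_def by blast
  show "pushE X C a d \<in> FJ X J C A'"
    unfolding FJ_def
  proof (intro CollectI conjI ballI impI)
    show "pushE X C a d \<in> Ext X C A'" using push_Ext[OF C am dE] .
    fix k assume kJ: "k \<in> J" and sk: "src X k = A'"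
    have km: "k \<in> morph X A' (tgt X k)" using mor_morph[OF J_mor[OF kJ]] sk by simp
    have ka: "cmp X k a \<in> morph X A (tgt X k)" using cmp_morph[OF am km] .
    have kaJ: "cmp X k a \<in> J" using J_cmp[OF kJ km am] .
    have "pushE X C k (pushE X C a d) = pushE X C (cmp X k a) d" using push_cmp[OF C am km dE] by simp
    also have "\<dots> = ezero X C (tgt X k)" using d kaJ morphD[OF ka] unfolding FJ_def by auto
    finally show "pushE X C k (pushE X C a d) = ezero X C (tgt X k)" .
  qed
next
  fix A C C' c d assume A: "A \<in> ob X" and cm: "c \<in> morph X C' C" and d: "d \<in> FJ X J C A"
  have dE: "d \<in> Ext X C A" using d unfolding FJ_def by blast
  show "pullE X A c d \<in> FJ X J C' A"
    unfolding FJ_def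
  proof (intro CollectI conjI ballI impI)
    show "pullE X A c d \<in> Ext X C' A" using pull_Ext[OF A cm dE] .
    fix k assume kJ: "k \<in> J" and sk: "src X k = A"
    have km: "k \<in> morph X A (tgt X k)" using mor_morph[OF J_mor[OF kJ]] sk by simp
    have "pushE X C' k (pullE X A c d) = pullE X (tgt X k) c (pushE X C k d)"
      using pull_push[OF km cm dE] by simp
    also have "pushE X C k d = ezero X C (tgt X k)" using d kJ sk unfolding FJ_def by blast
    also have "pullE X (tgt X k) c (ezero X C (tgt X k)) = ezero X C' (tgt X k)"
      using pull_zero[OF morphD(2)[OF km] cm] .
    finally show "pushE X C' k (pullE X A c d) = ezero X C' (tgt X k)" .
  qed
qed

lemma sub_FI: "additive_subfunctor X (FI X I)"
  unfolding additive_subfunctor_def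
proof (intro conjI ballI allI impI)
  fix C A assume C: "C \<in> ob X" and A: "A \<in> ob X"
  interpret G: group "extg X C A" using ext_group[OF C A] .
  have iz: "\<And>i. i \<in> I \<Longrightarrow> tgt X i = C \<Longrightarrow> i \<in> morph X (src X i) C \<and> src X i \<in> ob X"
    using mor_morph I_mor mor_ob by fastforce
  show "subgroup (FI X I C A) (extg X C A)"
  proof (rule G.subgroupI)
    show "FI X I C A \<subseteq> carrier (extg X C A)" unfolding FI_def Ext_def by blast
    have "ezero X C A \<in> FI X I C A"
      unfolding FI_def using ezero_Ext[OF C A] pull_zero[OF A] iz by auto
    then show "FI X I C A \<noteq> {}" by blast
  next
    fix a assume a: "a \<in> FI X I C A"
    have aE: "a \<in> carrier (extg X C A)" using a unfolding FI_def Ext_def by blast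
    show "inv\<^bsub>extg X C A\<^esub> a \<in> FI X I C A"
      unfolding FI_def
    proof (intro CollectI conjI ballI impI)
      show "inv\<^bsub>extg X C A\<^esub> a \<in> Ext X C A" using aE unfolding Ext_def by simp
      fix i assume iI: "i \<in> I" and ti: "tgt X i = C"
      have im: "i \<in> morph X (src X i) C" and si: "src X i \<in> ob X" using iz[OF iI ti] by auto
      have "pullE X A i a = ezero X (src X i) A" using a iI ti unfolding FI_def by blast
      then show "pullE X A i (inv\<^bsub>extg X C A\<^esub> a) = ezero X (src X i) A"
        using hom_kernel(1)[OF ext_group[OF C A] ext_group[OF si A] pull_hom[OF A im] aE aE]
        unfolding ezero_def by simp
    qed
  next
    fix a b assume a: "a \<in> FI X I C A" and b: "b \<in> FI X I C A"
    have aE: "a \<in> carrier (extg X C A)" using a unfolding FI_def Ext_def by blast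
    have bE: "b \<in> carrier (extg X C A)" using b unfolding FI_def Ext_def by blast
    show "a \<otimes>\<^bsub>extg X C A\<^esub> b \<in> FI X I C A"
      unfolding FI_def
    proof (intro CollectI conjI ballI impI)
      show "a \<otimes>\<^bsub>extg X C A\<^esub> b \<in> Ext X C A" using aE bE unfolding Ext_def by simp
      fix i assume iI: "i \<in> I" and ti: "tgt X i = C"
      have im: "i \<in> morph X (src X i) C" and si: "src X i \<in> ob X" using iz[OF iI ti] by auto
      have "pullE X A i a = ezero X (src X i) A" "pullE X A i b = ezero X (src X i) A"
        using a b iI ti unfolding FI_def by blast+
      then show "pullE X A i (a \<otimes>\<^bsub>extg X C A\<^esub> b) = ezero X (src X i) A"
        using hom_kernel(2)[OF ext_group[OF C A] ext_group[OF si A] pull_hom[OF A im] aE bE]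
        unfolding ezero_def by simp
    qed
  qed
next
  fix C A A' a d assume C: "C \<in> ob X" and am: "a \<in> morph X A A'" and d: "d \<in> FI X I C A"
  have dE: "d \<in> Ext X C A" using d unfolding FI_def by blast
  show "pushE X C a d \<in> FI X I C A'"
    unfolding FI_def
  proof (intro CollectI conjI ballI impI)
    show "pushE X C a d \<in> Ext X C A'" using push_Ext[OF C am dE] .
    fix i assume iI: "i \<in> I" and ti: "tgt X i = C"
    have im: "i \<in> morph X (src X i) C" using mor_morph[OF I_mor[OF iI]] ti by simp
    have "pullE X A' i (pushE X C a d) = pushE X (src X i) a (pullE X A i d)"
      using pull_push[OF am im dE] .
    also have "pullE X A i d = ezero X (src X i) A" using d iI ti unfolding FI_def by blast
    also have "pushE X (src X i) a (ezero X (src X i) A) = ezero X (src X i) A'"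
      using push_zero[OF morphD(1)[OF im] am] .
    finally show "pullE X A' i (pushE X C a d) = ezero X (src X i) A'" .
  qed
next
  fix A C C' c d assume A: "A \<in> ob X" and cm: "c \<in> morph X C' C" and d: "d \<in> FI X I C A"
  have dE: "d \<in> Ext X C A" using d unfolding FI_def by blast
  show "pullE X A c d \<in> FI X I C' A"
    unfolding FI_def
  proof (intro CollectI conjI ballI impI)
    show "pullE X A c d \<in> Ext X C' A" using pull_Ext[OF A cm dE] .
    fix i assume iI: "i \<in> I" and ti: "tgt X i = C'"
    have im: "i \<in> morph X (src X i) C'" using mor_morph[OF I_mor[OF iI]] ti by simp
    have ci: "cmp X c i \<in> morph X (src X i) C" using cmp_morph[OF im cm] .
    have ciI: "cmp X c i \<in> I" using I_cmp[OF iI im cm] .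
    have "pullE X A i (pullE X A c d) = pullE X A (cmp X c i) d" using pull_cmp[OF A cm im dE] by simp
    also have "\<dots> = ezero X (src X i) A" using d ciI morphD[OF ci] unfolding FI_def by auto
    finally show "pullE X A i (pullE X A c d) = ezero X (src X i) A" .
  qed
qed

lemma main:
  assumes ei: "enough_injectives X" and ep: "enough_projectives X"
  shows "(complete_cotorsion_pair X I J \<longleftrightarrow> spec_precovering X I) \<and>
    (complete_cotorsion_pair X I J \<longleftrightarrow>
       (\<exists>F. additive_subfunctor X F \<and> enough_spec_inj X F \<and> I = Ph X F)) \<and>
    (complete_cotorsion_pair X I J \<longleftrightarrow>
       (\<exists>F. additive_subfunctor X F \<and> enough_spec_proj X F \<and> I = F_proj X F)) \<and>
    (complete_cotorsion_pair X I J \<longleftrightarrow>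
       enough_spec_inj X (upstar X I) \<and> I = Ph X (upstar X I)) \<and>
    (complete_cotorsion_pair X I J \<longleftrightarrow>
       enough_spec_proj X (lowstar X J) \<and> I = F_proj X (lowstar X J)) \<and>
    (complete_cotorsion_pair X I J \<longleftrightarrow> spec_preenveloping X J) \<and>
    (complete_cotorsion_pair X I J \<longleftrightarrow>
       (\<exists>F. additive_subfunctor X F \<and> enough_spec_proj X F \<and> J = Coph X F)) \<and>
    (complete_cotorsion_pair X I J \<longleftrightarrow>
       (\<exists>F. additive_subfunctor X F \<and> enough_spec_inj X F \<and> J = F_inj X F)) \<and>
    (complete_cotorsion_pair X I J \<longleftrightarrow>
       enough_spec_proj X (lowstar X J) \<and> J = Coph X (lowstar X J)) \<and>
    (complete_cotorsion_pair X I J \<longleftrightarrow>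
       enough_spec_inj X (upstar X I) \<and> J = F_inj X (upstar X I))"
proof -
  have Pre: "complete_cotorsion_pair X I J \<longleftrightarrow> spec_precovering X I"
    unfolding complete_cotorsion_pair_def using cp pre_env[OF _ ei] by blast
  have Env: "complete_cotorsion_pair X I J \<longleftrightarrow> spec_preenveloping X J"
    unfolding complete_cotorsion_pair_def using cp env_pre[OF _ ep] by blast
  have esiFJ: "spec_preenveloping X J \<Longrightarrow> enough_spec_inj X (FJ X J)"
    by (rule G67[OF _ FJ_pull G5 G4])
  have esiU: "spec_preenveloping X J \<Longrightarrow> enough_spec_inj X (upstar X I)"
    by (rule G67[OF _ _ G9 G8]) (auto simp: upstar_def)
  have espFI: "spec_precovering X I \<Longrightarrow> enough_spec_proj X (FI X I)"
    by (rule H67[OF _ FI_push H4 H5])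
  have espL: "spec_precovering X I \<Longrightarrow> enough_spec_proj X (lowstar X J)"
    by (rule H67[OF _ _ H8 H9]) (auto simp: lowstar_def)
  have s3: "complete_cotorsion_pair X I J \<longleftrightarrow>
       (\<exists>F. additive_subfunctor X F \<and> enough_spec_inj X F \<and> I = Ph X F)"
    using Env esiFJ sub_FJ G4 G1 by metis
  have s4: "complete_cotorsion_pair X I J \<longleftrightarrow>
       (\<exists>F. additive_subfunctor X F \<and> enough_spec_proj X F \<and> I = F_proj X F)"
    using Pre espFI sub_FI H4 H1 by metis
  have s5: "complete_cotorsion_pair X I J \<longleftrightarrow>
       enough_spec_inj X (upstar X I) \<and> I = Ph X (upstar X I)"
    using Env esiU G8 G1 by metis
  have s6: "complete_cotorsion_pair X I J \<longleftrightarrow>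
       enough_spec_proj X (lowstar X J) \<and> I = F_proj X (lowstar X J)"
    using Pre espL H8 H1 by metis
  have s8: "complete_cotorsion_pair X I J \<longleftrightarrow>
       (\<exists>F. additive_subfunctor X F \<and> enough_spec_proj X F \<and> J = Coph X F)"
    using Pre espFI sub_FI H5 H2 by metis
  have s9: "complete_cotorsion_pair X I J \<longleftrightarrow>
       (\<exists>F. additive_subfunctor X F \<and> enough_spec_inj X F \<and> J = F_inj X F)"
    using Env esiFJ sub_FJ G5 G2 by metis
  have s10: "complete_cotorsion_pair X I J \<longleftrightarrow>
       enough_spec_proj X (lowstar X J) \<and> J = Coph X (lowstar X J)"
    using Pre espL H9 H2 by metis
  have s11: "complete_cotorsion_pair X I J \<longleftrightarrow>
       enough_spec_inj X (upstar X I) \<and> J = F_inj X (upstar X I)"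
    using Env esiU G9 G2 by metis
  show ?thesis using Pre Env s3 s4 s5 s6 s8 s9 s10 s11 by blast
qed

end

theorem mainTheorem14:
  fixes X :: "('o,'m,'e) extri_data" and I J :: "'m set"
  assumes "extriangulated X"
    and "enough_injectives X" and "enough_projectives X"
    and "cotorsion_pair X I J"
  shows "(complete_cotorsion_pair X I J \<longleftrightarrow> spec_precovering X I) \<and>
    (complete_cotorsion_pair X I J \<longleftrightarrow>
       (\<exists>F. additive_subfunctor X F \<and> enough_spec_inj X F \<and> I = Ph X F)) \<and>
    (complete_cotorsion_pair X I J \<longleftrightarrow>
       (\<exists>F. additive_subfunctor X F \<and> enough_spec_proj X F \<and> I = F_proj X F)) \<and>
    (complete_cotorsion_pair X I J \<longleftrightarrow>
       enough_spec_inj X (upstar X I) \<and> I = Ph X (upstar X I)) \<and>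
    (complete_cotorsion_pair X I J \<longleftrightarrow>
       enough_spec_proj X (lowstar X J) \<and> I = F_proj X (lowstar X J)) \<and>
    (complete_cotorsion_pair X I J \<longleftrightarrow> spec_preenveloping X J) \<and>
    (complete_cotorsion_pair X I J \<longleftrightarrow>
       (\<exists>F. additive_subfunctor X F \<and> enough_spec_proj X F \<and> J = Coph X F)) \<and>
    (complete_cotorsion_pair X I J \<longleftrightarrow>
       (\<exists>F. additive_subfunctor X F \<and> enough_spec_inj X F \<and> J = F_inj X F)) \<and>
    (complete_cotorsion_pair X I J \<longleftrightarrow>
       enough_spec_proj X (lowstar X J) \<and> J = Coph X (lowstar X J)) \<and>
    (complete_cotorsion_pair X I J \<longleftrightarrow>
       enough_spec_inj X (upstar X I) \<and> J = F_inj X (upstar X I))"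
proof -
  interpret cpair X I J
    by (rule cpair.intro[OF extc.intro[OF assms(1)] cpair_axioms.intro[OF assms(4)]])
  show ?thesis using main[OF assms(2,3)] .
qed


end
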